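(* Let $\sigma_e>0$, $\beta=(\beta_2,\beta_1)^T\in\mathbb{R}^2$. For every integer $n>2$ let $x_1,\dots,x_n\in\mathbb{R}$ be deterministic (possibly depending on $n$), $X_n$ the $n\times2$ matrix with rows $(1,x_i)$, $Y_n=(y_1,\dots,y_n)^T\sim\mathcal{N}(X_n\beta,\sigma_e^2I_{n\times n})$, and let $\Delta_n>0$, $\rho_n>0$ be sequences. Assume: (1) $\bar x\to c_x$, $\overline{x^2}\to c_{x^2}$ with $c_{x^2}>c_x^2$; (2) $\eta_n^2\to\eta^2$ for some $\eta\in\mathbb{R}$, where $\eta_n^2=\|X_n\beta-X_n\beta^N\|^2/\sigma_e^2$, $\beta^N=(\beta_2+\beta_1\bar x,0)^T$; (3) $\Delta_n^2/(\rho_nn)\to0$, $\Delta_n^4/(\rho_nn)\to0$; (4) $\mathbb{P}[\exists i,\ y_i\notin[-\Delta_n,\Delta_n]]\to0$ and $x_i\in[-\Delta_n,\Delta_n]$ for all $i$. Then $$\frac{n(\tilde\beta^T\tilde M_n\tilde\beta-2\tilde\beta^T\tilde F_n+\tilde G_n)}{n-2}\xrightarrow{P}\sigma_e^2\quad\text{and}\quad n(\tilde\beta-\tilde\beta^N)^T\tilde M_n(\tilde\beta-\tilde\beta^N)\xrightarrow{D}\chi^2_1(\eta^2)\,\sigma_e^2.$$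
   Context: $\bar x=\frac1n\sum x_i$, $\overline{x^2}=\frac1n\sum x_i^2$. $[z]_a^b$ is $z$ clipped to $[a,b]$. With $\Delta=\Delta_n$, $\rho'=\rho_n/5$ and independent Gaussian noises: $\tilde{\bar x}=\frac1n\sum_i[x_i]_{-\Delta}^{\Delta}+\mathcal{N}(0,\frac{2\Delta^2}{\rho'n^2})$, $\tilde{\bar y}=\frac1n\sum_i[y_i]_{-\Delta}^{\Delta}+\mathcal{N}(0,\frac{2\Delta^2}{\rho'n^2})$, $\widetilde{\overline{x^2}}=\frac1n\sum_i[x_i^2]_0^{\Delta^2}+\mathcal{N}(0,\frac{\Delta^4}{2\rho'n^2})$, $\widetilde{\overline{xy}}=\frac1n\sum_i[x_iy_i]_{-\Delta^2}^{\Delta^2}+\mathcal{N}(0,\frac{2\Delta^4}{\rho'n^2})$, $\widetilde{\overline{y^2}}=\frac1n\sum_i[y_i^2]_0^{\Delta^2}+\mathcal{N}(0,\frac{\Delta^4}{2\rho'n^2})$; $\tilde\beta_1=\frac{\widetilde{\overline{xy}}-\tilde{\bar x}\tilde{\bar y}}{\widetilde{\overline{x^2}}-\tilde{\bar x}^2}$, $\tilde\beta_2=\frac{\tilde{\bar y}\widetilde{\overline{x^2}}-\tilde{\bar x}\widetilde{\overline{xy}}}{\widetilde{\overline{x^2}}-\tilde{\bar x}^2}$, $\tilde\beta=(\tilde\beta_2,\tilde\beta_1)^T$, $\tilde\beta^N=(\tilde{\bar y},0)^T$, $\tilde M_n=\begin{pmatrix}1&\tilde{\bar x}\\\tilde{\bar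 x}&\widetilde{\overline{x^2}}\end{pmatrix}$, $\tilde F_n=(\tilde{\bar y},\widetilde{\overline{xy}})^T$, $\tilde G_n=\widetilde{\overline{y^2}}$. $\chi^2_K(\lambda)$ is the law of $\|Z\|^2$ with $Z\sim\mathcal{N}(v,I_{K\times K})$, $\|v\|^2=\lambda$; $\chi^2_1(\eta^2)\sigma_e^2$ denotes the law of $\sigma_e^2W$ with $W\sim\chi^2_1(\eta^2)$. Convergence is as $n\to\infty$. *)

theory Defs
  imports "HOL-Probability.Probability"
begin

definition clip :: "real \<Rightarrow> real \<Rightarrow> real \<Rightarrow> real" where
  "clip a b z = max a (min b z)"

text \<open>Arguments: clipping bound D (Delta_n), privacy
  parameter r (rho_n), sample size n, covariates x, responses y, and five independent
  standard normal variables z 0, ..., z 4 (scaled to the required variances).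
  rho' = r / 5.\<close>

definition xbar_t :: "real \<Rightarrow> real \<Rightarrow> nat \<Rightarrow> (nat \<Rightarrow> real) \<Rightarrow> (nat \<Rightarrow> real) \<Rightarrow> (nat \<Rightarrow> real) \<Rightarrow> real" where
  "xbar_t D r n x y z = (\<Sum>i<n. clip (-D) D (x i)) / real n
      + sqrt (2 * D^2 / ((r/5) * (real n)^2)) * z 0"

definition ybar_t :: "real \<Rightarrow> real \<Rightarrow> nat \<Rightarrow> (nat \<Rightarrow> real) \<Rightarrow> (nat \<Rightarrow> real) \<Rightarrow> (nat \<Rightarrow> real) \<Rightarrow> real" where
  "ybar_t D r n x y z = (\<Sum>i<n. clip (-D) D (y i)) / real n
      + sqrt (2 * D^2 / ((r/5) * (real n)^2)) * z 1"

definition x2bar_t :: "real \<Rightarrow> real \<Rightarrow> nat \<Rightarrow> (nat \<Rightarrow> real) \<Rightarrow> (nat \<Rightarrow> real) \<Rightarrow> (nat \<Rightarrow> real) \<Rightarrow> real" where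
  "x2bar_t D r n x y z = (\<Sum>i<n. clip 0 (D^2) ((x i)^2)) / real n
      + sqrt (D^4 / (2 * (r/5) * (real n)^2)) * z 2"

definition xybar_t :: "real \<Rightarrow> real \<Rightarrow> nat \<Rightarrow> (nat \<Rightarrow> real) \<Rightarrow> (nat \<Rightarrow> real) \<Rightarrow> (nat \<Rightarrow> real) \<Rightarrow> real" where
  "xybar_t D r n x y z = (\<Sum>i<n. clip (-(D^2)) (D^2) (x i * y i)) / real n
      + sqrt (2 * D^4 / ((r/5) * (real n)^2)) * z 3"

definition y2bar_t :: "real \<Rightarrow> real \<Rightarrow> nat \<Rightarrow> (nat \<Rightarrow> real) \<Rightarrow> (nat \<Rightarrow> real) \<Rightarrow> (nat \<Rightarrow> real) \<Rightarrow> real" where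
  "y2bar_t D r n x y z = (\<Sum>i<n. clip 0 (D^2) ((y i)^2)) / real n
      + sqrt (D^4 / (2 * (r/5) * (real n)^2)) * z 4"

text \<open>Private OLS estimates (beta_1 = slope, beta_2 = intercept).\<close>
definition beta1_t where
  "beta1_t D r n x y z =
     (xybar_t D r n x y z - xbar_t D r n x y z * ybar_t D r n x y z) /
     (x2bar_t D r n x y z - (xbar_t D r n x y z)^2)"

definition beta2_t where
  "beta2_t D r n x y z =
     (ybar_t D r n x y z * x2bar_t D r n x y z - xbar_t D r n x y z * xybar_t D r n x y z) /
     (x2bar_t D r n x y z - (xbar_t D r n x y z)^2)"

definition qform2 :: "real \<Rightarrow> real \<Rightarrow> real \<Rightarrow> real \<Rightarrow> real \<Rightarrow> real" where
  "qform2 a b c u v = u * u * a + 2 * u * v * b + v * v * c"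

text \<open>beta~^T M~ beta~ - 2 beta~^T F~ + G~ with beta~ = (beta2~, beta1~),
  M~ = ((1, xbar~),(xbar~, x2bar~)), F~ = (ybar~, xybar~), G~ = y2bar~.\<close>
definition resid_t where
  "resid_t D r n x y z =
     qform2 1 (xbar_t D r n x y z) (x2bar_t D r n x y z) (beta2_t D r n x y z) (beta1_t D r n x y z)
     - 2 * (beta2_t D r n x y z * ybar_t D r n x y z + beta1_t D r n x y z * xybar_t D r n x y z)
     + y2bar_t D r n x y z"

text \<open>(beta~ - beta~N)^T M~ (beta~ - beta~N) with beta~N = (ybar~, 0).\<close>
definition ftest_t where
  "ftest_t D r n x y z =
     qform2 1 (xbar_t D r n x y z) (x2bar_t D r n x y z)
       (beta2_t D r n x y z - ybar_t D r n x y z) (beta1_t D r n x y z - 0)"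

end

theory Submission
  imports Defs "HOL-Real_Asymp.Real_Asymp"
begin

lemma meas_le2:
  assumes "prob_space N" "\<And>\<omega>. \<omega> \<in> space N \<Longrightarrow> P \<omega> \<Longrightarrow> Q \<omega> \<or> R \<omega>"
    "{\<omega>\<in>space N. Q \<omega>} \<in> sets N" "{\<omega>\<in>space N. R \<omega>} \<in> sets N"
  shows "measure N {\<omega>\<in>space N. P \<omega>} \<le> measure N {\<omega>\<in>space N. Q \<omega>} + measure N {\<omega>\<in>space N. R \<omega>}"
proof -
  interpret prob_space N by fact
  have "measure N {\<omega>\<in>space N. P \<omega>} \<le> measure N ({\<omega>\<in>space N. Q \<omega>} \<union> {\<omega>\<in>space N. R \<omega>})"
    by (rule finite_measure_mono) (use assms in auto)
  also have "\<dots> \<le> measure N {\<omega>\<in>space N. Q \<omega>} + measure N {\<omega>\<in>space N. R \<omega>}"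
    by (rule measure_Un_le) (use assms in auto)
  finally show ?thesis .
qed

lemma meas_le1:
  assumes "prob_space N" "\<And>\<omega>. \<omega> \<in> space N \<Longrightarrow> P \<omega> \<Longrightarrow> Q \<omega>"
    "{\<omega>\<in>space N. Q \<omega>} \<in> sets N"
  shows "measure N {\<omega>\<in>space N. P \<omega>} \<le> measure N {\<omega>\<in>space N. Q \<omega>}"
proof -
  interpret prob_space N by fact
  show ?thesis
    by (rule finite_measure_mono) (use assms in auto)
qed

lemma lim0_sandwich:
  fixes f g :: "nat \<Rightarrow> real"
  assumes "\<forall>\<^sub>F n in sequentially. 0 \<le> f n \<and> f n \<le> g n" "g \<longlonglongrightarrow> 0"
  shows "f \<longlonglongrightarrow> 0"
  by (rule tendsto_sandwich[of "\<lambda>_. 0" f sequentially g 0])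
     (use assms in \<open>auto elim: eventually_mono\<close>)

locale seqprob =
  fixes M :: "nat \<Rightarrow> 'a measure"
  assumes prob: "\<And>n. n > 2 \<Longrightarrow> prob_space (M n)"
begin

lemma meas_const[measurable]: "(\<lambda>x. (c::real)) \<in> borel_measurable N" by simp

definition cip :: "(nat \<Rightarrow> 'a \<Rightarrow> real) \<Rightarrow> real \<Rightarrow> bool" where
  "cip X c \<longleftrightarrow> (\<forall>\<^sub>F n in sequentially. X n \<in> borel_measurable (M n)) \<and>
     (\<forall>e>0. (\<lambda>n. measure (M n) {\<omega> \<in> space (M n). e < \<bar>X n \<omega> - c\<bar>}) \<longlonglongrightarrow> 0)"

definition bip :: "(nat \<Rightarrow> 'a \<Rightarrow> real) \<Rightarrow> bool" where
  "bip X \<longleftrightarrow> (\<forall>\<^sub>F n in sequentially. X n \<in> borel_measurable (M n)) \<and>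
     (\<forall>e>0. \<exists>K. \<forall>\<^sub>F n in sequentially. measure (M n) {\<omega> \<in> space (M n). K < \<bar>X n \<omega>\<bar>} \<le> e)"

lemma ev_gt2: "\<forall>\<^sub>F n in sequentially. (2::nat) < n"
  by (simp add: eventually_sequentially) (metis Suc_le_eq)

lemma cip_meas: "cip X c \<Longrightarrow> \<forall>\<^sub>F n in sequentially. X n \<in> borel_measurable (M n)"
  by (simp add: cip_def)

lemma cip_lim: "cip X c \<Longrightarrow> e > 0 \<Longrightarrow> (\<lambda>n. measure (M n) {\<omega> \<in> space (M n). e < \<bar>X n \<omega> - c\<bar>}) \<longlonglongrightarrow> 0"
  by (simp add: cip_def)

lemma cip_cong_ev:
  assumes "cip X c" "\<forall>\<^sub>F n in sequentially. \<forall>\<omega>\<in>space (M n). X n \<omega> = X' n \<omega>"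
  shows "cip X' c"
proof -
  have m: "\<forall>\<^sub>F n in sequentially. X' n \<in> borel_measurable (M n)"
    using cip_meas[OF assms(1)] assms(2)
    by eventually_elim (metis measurable_cong)
  show ?thesis unfolding cip_def
  proof (intro conjI m allI impI)
    fix e :: real assume e: "e > 0"
    have "\<forall>\<^sub>F n in sequentially. measure (M n) {\<omega> \<in> space (M n). e < \<bar>X' n \<omega> - c\<bar>}
            = measure (M n) {\<omega> \<in> space (M n). e < \<bar>X n \<omega> - c\<bar>}"
      using assms(2) by eventually_elim (intro arg_cong[where f="measure _"], auto)
    then show "(\<lambda>n. measure (M n) {\<omega> \<in> space (M n). e < \<bar>X' n \<omega> - c\<bar>}) \<longlonglongrightarrow> 0"
      using cip_lim[OF assms(1) e] by (subst tendsto_cong) auto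
  qed
qed

lemma cip_const:
  assumes "a \<longlonglongrightarrow> c"
  shows "cip (\<lambda>n \<omega>. a n) c"
  unfolding cip_def
proof (intro conjI allI impI)
  show "\<forall>\<^sub>F n in sequentially. (\<lambda>\<omega>. a n) \<in> borel_measurable (M n)" by simp
  fix e :: real assume "e > 0"
  then have "\<forall>\<^sub>F n in sequentially. dist (a n) c < e" using assms by (simp add: tendsto_iff)
  then have "\<forall>\<^sub>F n in sequentially. measure (M n) {\<omega> \<in> space (M n). e < \<bar>a n - c\<bar>} = 0"
    by eventually_elim (auto simp: dist_real_def)
  then show "(\<lambda>n. measure (M n) {\<omega> \<in> space (M n). e < \<bar>a n - c\<bar>}) \<longlonglongrightarrow> 0"
    by (subst tendsto_cong) auto
qed

lemma cip_iff0: "cip X c \<longleftrightarrow> cip (\<lambda>n \<omega>. X n \<omega> - c) 0"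
proof -
  have "(\<forall>\<^sub>F n in sequentially. X n \<in> borel_measurable (M n)) \<longleftrightarrow>
        (\<forall>\<^sub>F n in sequentially. (\<lambda>\<omega>. X n \<omega> - c) \<in> borel_measurable (M n))"
  proof
    assume "\<forall>\<^sub>F n in sequentially. X n \<in> borel_measurable (M n)"
    then show "\<forall>\<^sub>F n in sequentially. (\<lambda>\<omega>. X n \<omega> - c) \<in> borel_measurable (M n)"
      by eventually_elim (auto intro!: borel_measurable_diff)
  next
    assume "\<forall>\<^sub>F n in sequentially. (\<lambda>\<omega>. X n \<omega> - c) \<in> borel_measurable (M n)"
    then show "\<forall>\<^sub>F n in sequentially. X n \<in> borel_measurable (M n)"
    proof eventually_elim
      case (elim n)
      then have "(\<lambda>\<omega>. (X n \<omega> - c) + c) \<in> borel_measurable (M n)" by measurable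
      then show ?case by simp
    qed
  qed
  then show ?thesis by (simp add: cip_def)
qed

lemma cip_add:
  assumes X: "cip X a" and Y: "cip Y b"
  shows "cip (\<lambda>n \<omega>. X n \<omega> + Y n \<omega>) (a + b)"
  unfolding cip_def
proof (intro conjI allI impI)
  show "\<forall>\<^sub>F n in sequentially. (\<lambda>\<omega>. X n \<omega> + Y n \<omega>) \<in> borel_measurable (M n)"
    using cip_meas[OF X] cip_meas[OF Y] by eventually_elim measurable
  fix e :: real assume e: "e > 0"
  have ev: "\<forall>\<^sub>F n in sequentially. 0 \<le> measure (M n) {\<omega> \<in> space (M n). e < \<bar>X n \<omega> + Y n \<omega> - (a + b)\<bar>} \<and>
     measure (M n) {\<omega> \<in> space (M n). e < \<bar>X n \<omega> + Y n \<omega> - (a + b)\<bar>} \<le>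
     measure (M n) {\<omega> \<in> space (M n). e/2 < \<bar>X n \<omega> - a\<bar>} + measure (M n) {\<omega> \<in> space (M n). e/2 < \<bar>Y n \<omega> - b\<bar>}"
    using cip_meas[OF X] cip_meas[OF Y] ev_gt2
  proof eventually_elim
    case (elim n)
    have [measurable]: "X n \<in> borel_measurable (M n)" "Y n \<in> borel_measurable (M n)" using elim by auto
    show ?case
      apply (intro conjI measure_nonneg meas_le2)
      subgoal using elim by (simp add: prob)
      subgoal by arith
      subgoal by measurable
      subgoal by measurable
      done
  qed
  show "(\<lambda>n. measure (M n) {\<omega> \<in> space (M n). e < \<bar>X n \<omega> + Y n \<omega> - (a + b)\<bar>}) \<longlonglongrightarrow> 0"
    apply (rule lim0_sandwich[OF ev])
    by (intro tendsto_add_zero cip_lim[OF X] cip_lim[OF Y]) (use e in auto)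
qed


lemma cip0_I:
  assumes meas: "\<forall>\<^sub>F n in sequentially. X n \<in> borel_measurable (M n)"
    and b: "\<And>e d. e > 0 \<Longrightarrow> d > 0 \<Longrightarrow> \<forall>\<^sub>F n in sequentially. measure (M n) {\<omega> \<in> space (M n). e < \<bar>X n \<omega>\<bar>} \<le> d"
  shows "cip X 0"
  unfolding cip_def
proof (intro conjI meas allI impI)
  fix e :: real assume e: "e > 0"
  show "(\<lambda>n. measure (M n) {\<omega> \<in> space (M n). e < \<bar>X n \<omega> - 0\<bar>}) \<longlonglongrightarrow> 0"
  proof (rule tendstoI)
    fix d :: real assume d: "d > 0"
    show "\<forall>\<^sub>F n in sequentially. dist (measure (M n) {\<omega> \<in> space (M n). e < \<bar>X n \<omega> - 0\<bar>}) 0 < d"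
      using b[OF e, of "d/2"] d by (auto simp: dist_real_def elim: eventually_mono)
  qed
qed

lemma cip0_D:
  assumes "cip X 0" "e > 0" "d > 0"
  shows "\<forall>\<^sub>F n in sequentially. measure (M n) {\<omega> \<in> space (M n). e < \<bar>X n \<omega>\<bar>} \<le> d"
proof -
  have "\<forall>\<^sub>F n in sequentially. dist (measure (M n) {\<omega> \<in> space (M n). e < \<bar>X n \<omega> - 0\<bar>}) 0 < d"
    using cip_lim[OF assms(1,2)] assms(3) by (rule tendstoD)
  then show ?thesis by eventually_elim (auto simp: dist_real_def)
qed

lemma bip_meas: "bip X \<Longrightarrow> \<forall>\<^sub>F n in sequentially. X n \<in> borel_measurable (M n)"
  by (simp add: bip_def)

lemma bip_D:
  assumes "bip X" "d > 0"
  obtains K where "K > 0" "\<forall>\<^sub>F n in sequentially. measure (M n) {\<omega> \<in> space (M n). K < \<bar>X n \<omega>\<bar>} \<le> d"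
proof -
  obtain K where K: "\<forall>\<^sub>F n in sequentially. measure (M n) {\<omega> \<in> space (M n). K < \<bar>X n \<omega>\<bar>} \<le> d"
    using assms unfolding bip_def by blast
  have "\<forall>\<^sub>F n in sequentially. measure (M n) {\<omega> \<in> space (M n). \<bar>K\<bar> + 1 < \<bar>X n \<omega>\<bar>} \<le> d"
    using K bip_meas[OF assms(1)] ev_gt2
  proof eventually_elim
    case (elim n)
    have [measurable]: "X n \<in> borel_measurable (M n)" using elim by auto
    have "measure (M n) {\<omega> \<in> space (M n). \<bar>K\<bar> + 1 < \<bar>X n \<omega>\<bar>} \<le> measure (M n) {\<omega> \<in> space (M n). K < \<bar>X n \<omega>\<bar>}"
      by (rule meas_le1) (use elim prob in auto)
    then show ?case using elim by linarith
  qed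
  then show ?thesis by (intro that[of "\<bar>K\<bar> + 1"]) auto
qed

lemma cip_imp_bip:
  assumes "cip X c" shows "bip X"
  unfolding bip_def
proof (intro conjI allI impI cip_meas[OF assms])
  fix d :: real assume d: "d > 0"
  have "\<forall>\<^sub>F n in sequentially. dist (measure (M n) {\<omega> \<in> space (M n). 1 < \<bar>X n \<omega> - c\<bar>}) 0 < d"
    using tendstoD[OF cip_lim[OF assms, of 1] d] by simp
  then have "\<forall>\<^sub>F n in sequentially. measure (M n) {\<omega> \<in> space (M n). \<bar>c\<bar> + 1 < \<bar>X n \<omega>\<bar>} \<le> d"
    using cip_meas[OF assms] ev_gt2
  proof eventually_elim
    case (elim n)
    have [measurable]: "X n \<in> borel_measurable (M n)" using elim by auto
    have "measure (M n) {\<omega> \<in> space (M n). \<bar>c\<bar> + 1 < \<bar>X n \<omega>\<bar>} \<le> measure (M n) {\<omega> \<in> space (M n). 1 < \<bar>X n \<omega> - c\<bar>}"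
      by (rule meas_le1) (use elim prob in auto)
    then show ?case using elim by (auto simp: dist_real_def)
  qed
  then show "\<exists>K. \<forall>\<^sub>F n in sequentially. measure (M n) {\<omega> \<in> space (M n). K < \<bar>X n \<omega>\<bar>} \<le> d" by blast
qed

lemma bip_cip0_mult:
  assumes X: "bip X" and Y: "cip Y 0"
  shows "cip (\<lambda>n \<omega>. X n \<omega> * Y n \<omega>) 0"
proof (rule cip0_I)
  show "\<forall>\<^sub>F n in sequentially. (\<lambda>\<omega>. X n \<omega> * Y n \<omega>) \<in> borel_measurable (M n)"
    using bip_meas[OF X] cip_meas[OF Y] by eventually_elim measurable
  fix e d :: real assume e: "e > 0" and d: "d > 0"
  obtain K where K: "K > 0" "\<forall>\<^sub>F n in sequentially. measure (M n) {\<omega> \<in> space (M n). K < \<bar>X n \<omega>\<bar>} \<le> d/2"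
    using bip_D[OF X, of "d/2"] d by auto
  have Y2: "\<forall>\<^sub>F n in sequentially. measure (M n) {\<omega> \<in> space (M n). e/K < \<bar>Y n \<omega>\<bar>} \<le> d/2"
    using cip0_D[OF Y, of "e/K" "d/2"] e d K by auto
  show "\<forall>\<^sub>F n in sequentially. measure (M n) {\<omega> \<in> space (M n). e < \<bar>X n \<omega> * Y n \<omega>\<bar>} \<le> d"
    using K(2) Y2 bip_meas[OF X] cip_meas[OF Y] ev_gt2
  proof eventually_elim
    case (elim n)
    have [measurable]: "X n \<in> borel_measurable (M n)" "Y n \<in> borel_measurable (M n)" using elim by auto
    have "measure (M n) {\<omega> \<in> space (M n). e < \<bar>X n \<omega> * Y n \<omega>\<bar>} \<le>
      measure (M n) {\<omega> \<in> space (M n). K < \<bar>X n \<omega>\<bar>} + measure (M n) {\<omega> \<in> space (M n). e/K < \<bar>Y n \<omega>\<bar>}"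
    proof (rule meas_le2)
      fix \<omega> assume "e < \<bar>X n \<omega> * Y n \<omega>\<bar>"
      show "K < \<bar>X n \<omega>\<bar> \<or> e / K < \<bar>Y n \<omega>\<bar>"
      proof (rule ccontr)
        assume "\<not> ?thesis"
        then have "\<bar>X n \<omega>\<bar> \<le> K" "\<bar>Y n \<omega>\<bar> \<le> e/K" by auto
        then have "\<bar>X n \<omega>\<bar> * \<bar>Y n \<omega>\<bar> \<le> K * (e/K)" by (intro mult_mono) auto
        then show False using \<open>e < \<bar>X n \<omega> * Y n \<omega>\<bar>\<close> K by (simp add: abs_mult)
      qed
    qed (use elim prob in auto)
    then show ?case using elim by linarith
  qed
qed

lemma bip_add:
  assumes X: "bip X" and Y: "bip Y"
  shows "bip (\<lambda>n \<omega>. X n \<omega> + Y n \<omega>)"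
  unfolding bip_def
proof (intro conjI allI impI)
  show "\<forall>\<^sub>F n in sequentially. (\<lambda>\<omega>. X n \<omega> + Y n \<omega>) \<in> borel_measurable (M n)"
    using bip_meas[OF X] bip_meas[OF Y] by eventually_elim measurable
  fix d :: real assume d: "d > 0"
  obtain K where K: "K > 0" "\<forall>\<^sub>F n in sequentially. measure (M n) {\<omega> \<in> space (M n). K < \<bar>X n \<omega>\<bar>} \<le> d/2"
    using bip_D[OF X, of "d/2"] d by auto
  obtain L where L: "L > 0" "\<forall>\<^sub>F n in sequentially. measure (M n) {\<omega> \<in> space (M n). L < \<bar>Y n \<omega>\<bar>} \<le> d/2"
    using bip_D[OF Y, of "d/2"] d by auto
  have "\<forall>\<^sub>F n in sequentially. measure (M n) {\<omega> \<in> space (M n). K + L < \<bar>X n \<omega> + Y n \<omega>\<bar>} \<le> d"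
    using K(2) L(2) bip_meas[OF X] bip_meas[OF Y] ev_gt2
  proof eventually_elim
    case (elim n)
    have [measurable]: "X n \<in> borel_measurable (M n)" "Y n \<in> borel_measurable (M n)" using elim by auto
    have "measure (M n) {\<omega> \<in> space (M n). K + L < \<bar>X n \<omega> + Y n \<omega>\<bar>} \<le>
      measure (M n) {\<omega> \<in> space (M n). K < \<bar>X n \<omega>\<bar>} + measure (M n) {\<omega> \<in> space (M n). L < \<bar>Y n \<omega>\<bar>}"
      by (rule meas_le2) (use elim prob in \<open>auto\<close>)
    then show ?case using elim by linarith
  qed
  then show "\<exists>K. \<forall>\<^sub>F n in sequentially. measure (M n) {\<omega> \<in> space (M n). K < \<bar>X n \<omega> + Y n \<omega>\<bar>} \<le> d" by blast
qed

lemma bip_mult: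
  assumes X: "bip X" and Y: "bip Y"
  shows "bip (\<lambda>n \<omega>. X n \<omega> * Y n \<omega>)"
  unfolding bip_def
proof (intro conjI allI impI)
  show "\<forall>\<^sub>F n in sequentially. (\<lambda>\<omega>. X n \<omega> * Y n \<omega>) \<in> borel_measurable (M n)"
    using bip_meas[OF X] bip_meas[OF Y] by eventually_elim measurable
  fix d :: real assume d: "d > 0"
  obtain K where K: "K > 0" "\<forall>\<^sub>F n in sequentially. measure (M n) {\<omega> \<in> space (M n). K < \<bar>X n \<omega>\<bar>} \<le> d/2"
    using bip_D[OF X, of "d/2"] d by auto
  obtain L where L: "L > 0" "\<forall>\<^sub>F n in sequentially. measure (M n) {\<omega> \<in> space (M n). L < \<bar>Y n \<omega>\<bar>} \<le> d/2"
    using bip_D[OF Y, of "d/2"] d by auto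
  have "\<forall>\<^sub>F n in sequentially. measure (M n) {\<omega> \<in> space (M n). K * L < \<bar>X n \<omega> * Y n \<omega>\<bar>} \<le> d"
    using K(2) L(2) bip_meas[OF X] bip_meas[OF Y] ev_gt2
  proof eventually_elim
    case (elim n)
    have [measurable]: "X n \<in> borel_measurable (M n)" "Y n \<in> borel_measurable (M n)" using elim by auto
    have "measure (M n) {\<omega> \<in> space (M n). K * L < \<bar>X n \<omega> * Y n \<omega>\<bar>} \<le>
      measure (M n) {\<omega> \<in> space (M n). K < \<bar>X n \<omega>\<bar>} + measure (M n) {\<omega> \<in> space (M n). L < \<bar>Y n \<omega>\<bar>}"
    proof (rule meas_le2)
      fix \<omega> assume a: "K * L < \<bar>X n \<omega> * Y n \<omega>\<bar>"
      show "K < \<bar>X n \<omega>\<bar> \<or> L < \<bar>Y n \<omega>\<bar>"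
      proof (rule ccontr)
        assume "\<not> ?thesis"
        then have "\<bar>X n \<omega>\<bar> \<le> K" "\<bar>Y n \<omega>\<bar> \<le> L" by auto
        then have "\<bar>X n \<omega>\<bar> * \<bar>Y n \<omega>\<bar> \<le> K * L" by (intro mult_mono) (use K L in auto)
        then show False using a by (simp add: abs_mult)
      qed
    qed (use elim prob in auto)
    then show ?case using elim by linarith
  qed
  then show "\<exists>K. \<forall>\<^sub>F n in sequentially. measure (M n) {\<omega> \<in> space (M n). K < \<bar>X n \<omega> * Y n \<omega>\<bar>} \<le> d" by blast
qed

lemma cip_mult:
  assumes X: "cip X a" and Y: "cip Y b"
  shows "cip (\<lambda>n \<omega>. X n \<omega> * Y n \<omega>) (a * b)"
proof -
  have X0: "cip (\<lambda>n \<omega>. X n \<omega> - a) 0" using X cip_iff0 by blast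
  have Y0: "cip (\<lambda>n \<omega>. Y n \<omega> - b) 0" using Y cip_iff0 by blast
  have 1: "cip (\<lambda>n \<omega>. Y n \<omega> * (X n \<omega> - a)) 0" by (rule bip_cip0_mult[OF cip_imp_bip[OF Y] X0])
  have 2: "cip (\<lambda>n \<omega>. a * (Y n \<omega> - b)) 0"
    by (rule bip_cip0_mult[OF cip_imp_bip[OF cip_const[OF tendsto_const]] Y0])
  have "cip (\<lambda>n \<omega>. Y n \<omega> * (X n \<omega> - a) + a * (Y n \<omega> - b)) (0 + 0)" by (rule cip_add[OF 1 2])
  then have "cip (\<lambda>n \<omega>. X n \<omega> * Y n \<omega> - a * b) 0" by (simp add: algebra_simps)
  then show ?thesis using cip_iff0 by blast
qed

lemma cip_zero_outside:
  assumes meas: "\<forall>\<^sub>F n in sequentially. X n \<in> borel_measurable (M n)"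
    and B: "\<forall>\<^sub>F n in sequentially. {\<omega> \<in> space (M n). Q n \<omega>} \<in> sets (M n)"
    and out: "\<forall>\<^sub>F n in sequentially. \<forall>\<omega>\<in>space (M n). X n \<omega> \<noteq> 0 \<longrightarrow> Q n \<omega>"
    and lim: "(\<lambda>n. measure (M n) {\<omega> \<in> space (M n). Q n \<omega>}) \<longlonglongrightarrow> 0"
  shows "cip X 0"
proof (rule cip0_I[OF meas])
  fix e d :: real assume e: "e > 0" and d: "d > 0"
  have "\<forall>\<^sub>F n in sequentially. dist (measure (M n) {\<omega> \<in> space (M n). Q n \<omega>}) 0 < d"
    using lim d by (rule tendstoD)
  then show "\<forall>\<^sub>F n in sequentially. measure (M n) {\<omega> \<in> space (M n). e < \<bar>X n \<omega>\<bar>} \<le> d"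
    using B out ev_gt2
  proof eventually_elim
    case (elim n)
    have "measure (M n) {\<omega> \<in> space (M n). e < \<bar>X n \<omega>\<bar>} \<le> measure (M n) {\<omega> \<in> space (M n). Q n \<omega>}"
      by (rule meas_le1) (use elim prob e in auto)
    then show ?case using elim by (auto simp: dist_real_def)
  qed
qed

lemma markov2:
  assumes "prob_space N" "X \<in> borel_measurable N" "integrable N (\<lambda>\<omega>. (X \<omega>)^2)" "e > 0"
  shows "measure N {\<omega> \<in> space N. e < \<bar>X \<omega>\<bar>} \<le> (\<integral>\<omega>. (X \<omega>)^2 \<partial>N) / e^2"
proof -
  interpret prob_space N by fact
  have [measurable]: "X \<in> borel_measurable N" by fact
  have "e^2 * measure N {\<omega> \<in> space N. e < \<bar>X \<omega>\<bar>} = (\<integral>\<omega>. e^2 * indicator {\<omega> \<in> space N. e < \<bar>X \<omega>\<bar>} \<omega> \<partial>N)"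
    using emeasure_finite[of "{\<omega> \<in> space N. e < \<bar>X \<omega>\<bar>}"] by (simp add: top.not_eq_extremum)
  also have "\<dots> \<le> (\<integral>\<omega>. (X \<omega>)^2 \<partial>N)"
  proof (rule integral_mono)
    show "integrable N (\<lambda>\<omega>. e\<^sup>2 * indicator {\<omega> \<in> space N. e < \<bar>X \<omega>\<bar>} \<omega>)"
      by (intro integrable_mult_right integrable_real_indicator) (auto simp: less_top[symmetric])
    show "integrable N (\<lambda>\<omega>. (X \<omega>)\<^sup>2)" by fact
    fix \<omega> assume "\<omega> \<in> space N"
    show "e\<^sup>2 * indicator {\<omega> \<in> space N. e < \<bar>X \<omega>\<bar>} \<omega> \<le> (X \<omega>)\<^sup>2"
    proof (cases "e < \<bar>X \<omega>\<bar>")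
      case True
      then have "e^2 \<le> \<bar>X \<omega>\<bar>^2" using assms(4) by (intro power_mono) auto
      then show ?thesis using True \<open>\<omega> \<in> space N\<close> by (simp add: indicator_def)
    qed (simp add: indicator_def)
  qed
  finally show ?thesis using assms(4) by (simp add: field_simps)
qed

lemma cip_L2:
  assumes meas: "\<forall>\<^sub>F n in sequentially. X n \<in> borel_measurable (M n)"
    and int: "\<forall>\<^sub>F n in sequentially. integrable (M n) (\<lambda>\<omega>. (X n \<omega>)^2)"
    and lim: "(\<lambda>n. \<integral>\<omega>. (X n \<omega>)^2 \<partial>M n) \<longlonglongrightarrow> 0"
  shows "cip X 0"
  unfolding cip_def
proof (intro conjI meas allI impI)
  fix e :: real assume e: "e > 0"
  have "\<forall>\<^sub>F n in sequentially. 0 \<le> measure (M n) {\<omega> \<in> space (M n). e < \<bar>X n \<omega> - 0\<bar>} \<and>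
     measure (M n) {\<omega> \<in> space (M n). e < \<bar>X n \<omega> - 0\<bar>} \<le> (\<integral>\<omega>. (X n \<omega>)^2 \<partial>M n) / e^2"
    using meas int ev_gt2 by eventually_elim (use markov2 prob e in auto)
  then show "(\<lambda>n. measure (M n) {\<omega> \<in> space (M n). e < \<bar>X n \<omega> - 0\<bar>}) \<longlonglongrightarrow> 0"
    by (rule lim0_sandwich) (use lim tendsto_divide_zero in auto)
qed

lemma bip_L2:
  assumes meas: "\<forall>\<^sub>F n in sequentially. X n \<in> borel_measurable (M n)"
    and int: "\<forall>\<^sub>F n in sequentially. integrable (M n) (\<lambda>\<omega>. (X n \<omega>)^2)"
    and bnd: "\<forall>\<^sub>F n in sequentially. (\<integral>\<omega>. (X n \<omega>)^2 \<partial>M n) \<le> C"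
  shows "bip X"
  unfolding bip_def
proof (intro conjI meas allI impI)
  fix d :: real assume d: "d > 0"
  define K where "K = sqrt ((\<bar>C\<bar> + 1) / d)"
  have K: "K > 0" "K^2 = (\<bar>C\<bar> + 1) / d" using d by (auto simp: K_def)
  have "\<forall>\<^sub>F n in sequentially. measure (M n) {\<omega> \<in> space (M n). K < \<bar>X n \<omega>\<bar>} \<le> d"
    using meas int bnd ev_gt2
  proof eventually_elim
    case (elim n)
    have "measure (M n) {\<omega> \<in> space (M n). K < \<bar>X n \<omega>\<bar>} \<le> (\<integral>\<omega>. (X n \<omega>)^2 \<partial>M n) / K^2"
      by (rule markov2) (use prob elim K in auto)
    also have "\<dots> \<le> (\<bar>C\<bar> + 1) / K^2" using elim K d by (intro divide_right_mono) auto
    also have "\<dots> = d" using K d by simp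
    finally show ?case .
  qed
  then show "\<exists>K. \<forall>\<^sub>F n in sequentially. measure (M n) {\<omega> \<in> space (M n). K < \<bar>X n \<omega>\<bar>} \<le> d" by blast
qed

lemma cip_inverse:
  assumes X: "cip X a" and a: "a \<noteq> 0"
  shows "cip (\<lambda>n \<omega>. inverse (X n \<omega>)) (inverse a)"
proof -
  have X0: "cip (\<lambda>n \<omega>. X n \<omega> - a) 0" using X cip_iff0 by blast
  have "cip (\<lambda>n \<omega>. inverse (X n \<omega>) - inverse a) 0"
  proof (rule cip0_I)
    show "\<forall>\<^sub>F n in sequentially. (\<lambda>\<omega>. inverse (X n \<omega>) - inverse a) \<in> borel_measurable (M n)"
      using cip_meas[OF X] by eventually_elim (auto intro!: borel_measurable_diff borel_measurable_inverse)
    fix e d :: real assume e: "e > 0" and d: "d > 0"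
    have a1: "\<forall>\<^sub>F n in sequentially. measure (M n) {\<omega> \<in> space (M n). \<bar>a\<bar>/2 < \<bar>X n \<omega> - a\<bar>} \<le> d/2"
      using cip0_D[OF X0, of "\<bar>a\<bar>/2" "d/2"] a d by auto
    have a2: "\<forall>\<^sub>F n in sequentially. measure (M n) {\<omega> \<in> space (M n). e * a^2 / 2 < \<bar>X n \<omega> - a\<bar>} \<le> d/2"
      using cip0_D[OF X0, of "e * a^2 / 2" "d/2"] a d e by auto
    show "\<forall>\<^sub>F n in sequentially. measure (M n) {\<omega> \<in> space (M n). e < \<bar>inverse (X n \<omega>) - inverse a\<bar>} \<le> d"
      using a1 a2 cip_meas[OF X] ev_gt2
    proof eventually_elim
      case (elim n)
      have [measurable]: "X n \<in> borel_measurable (M n)" using elim by auto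
      have "measure (M n) {\<omega> \<in> space (M n). e < \<bar>inverse (X n \<omega>) - inverse a\<bar>} \<le>
        measure (M n) {\<omega> \<in> space (M n). \<bar>a\<bar>/2 < \<bar>X n \<omega> - a\<bar>} + measure (M n) {\<omega> \<in> space (M n). e * a^2 / 2 < \<bar>X n \<omega> - a\<bar>}"
      proof (rule meas_le2)
        fix \<omega> assume h: "e < \<bar>inverse (X n \<omega>) - inverse a\<bar>"
        show "\<bar>a\<bar>/2 < \<bar>X n \<omega> - a\<bar> \<or> e * a^2 / 2 < \<bar>X n \<omega> - a\<bar>"
        proof (rule ccontr)
          assume "\<not> ?thesis"
          then have h1: "\<bar>X n \<omega> - a\<bar> \<le> \<bar>a\<bar>/2" and h2: "\<bar>X n \<omega> - a\<bar> \<le> e * a^2 / 2" by auto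
          have xa: "\<bar>X n \<omega>\<bar> \<ge> \<bar>a\<bar>/2" using h1 by linarith
          then have x0: "X n \<omega> \<noteq> 0" using a by auto
          have "\<bar>inverse (X n \<omega>) - inverse a\<bar> = \<bar>X n \<omega> - a\<bar> / (\<bar>X n \<omega>\<bar> * \<bar>a\<bar>)"
          proof -
            have "inverse (X n \<omega>) - inverse a = (a - X n \<omega>) / (X n \<omega> * a)"
              using x0 a by (simp add: field_simps)
            then show ?thesis by (simp add: abs_divide abs_mult abs_minus_commute)
          qed
          also have "\<dots> \<le> (e * a^2 / 2) / ((\<bar>a\<bar>/2) * \<bar>a\<bar>)"
            using xa a h2 e by (intro frac_le mult_right_mono) (auto simp: zero_less_mult_iff)
          also have "\<dots> = e" using a by (simp add: power2_eq_square field_simps)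
          finally show False using h by simp
        qed
      qed (use elim prob in auto)
      then show ?case using elim by linarith
    qed
  qed
  then show ?thesis using cip_iff0 by blast
qed

lemma cip_divide:
  assumes X: "cip X a" and Y: "cip Y b" and b: "b \<noteq> 0"
  shows "cip (\<lambda>n \<omega>. X n \<omega> / Y n \<omega>) (a / b)"
  using cip_mult[OF X cip_inverse[OF Y b]] by (simp add: divide_inverse)

lemma cip_diff:
  assumes X: "cip X a" and Y: "cip Y b"
  shows "cip (\<lambda>n \<omega>. X n \<omega> - Y n \<omega>) (a - b)"
proof -
  have "cip (\<lambda>n \<omega>. X n \<omega> + (-1) * Y n \<omega>) (a + (-1) * b)"
    by (intro cip_add cip_mult Y X cip_const) simp
  then show ?thesis by simp
qed


lemma bip_cong_ev:
  assumes "bip X" "\<forall>\<^sub>F n in sequentially. \<forall>\<omega>\<in>space (M n). X n \<omega> = X' n \<omega>"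
  shows "bip X'"
proof -
  have m: "\<forall>\<^sub>F n in sequentially. X' n \<in> borel_measurable (M n)"
    using bip_meas[OF assms(1)] assms(2)
    by eventually_elim (metis measurable_cong)
  show ?thesis unfolding bip_def
  proof (intro conjI m allI impI)
    fix d :: real assume d: "d > 0"
    obtain K where K: "\<forall>\<^sub>F n in sequentially. measure (M n) {\<omega> \<in> space (M n). K < \<bar>X n \<omega>\<bar>} \<le> d"
      using assms(1) d unfolding bip_def by blast
    have "\<forall>\<^sub>F n in sequentially. measure (M n) {\<omega> \<in> space (M n). K < \<bar>X' n \<omega>\<bar>} \<le> d"
      using K assms(2)
    proof eventually_elim
      case (elim n)
      have "{\<omega> \<in> space (M n). K < \<bar>X' n \<omega>\<bar>} = {\<omega> \<in> space (M n). K < \<bar>X n \<omega>\<bar>}" using elim by auto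
      then show ?case using elim by simp
    qed
    then show "\<exists>K. \<forall>\<^sub>F n in sequentially. measure (M n) {\<omega> \<in> space (M n). K < \<bar>X' n \<omega>\<bar>} \<le> d" by blast
  qed
qed

end

lemma (in prob_space) indep_sets_reindex:
  assumes "indep_sets F (f ` I)" "inj_on f I"
  shows "indep_sets (\<lambda>i. F (f i)) I"
  unfolding indep_sets_def
proof (intro conjI ballI allI impI)
  fix i assume "i \<in> I" then show "F (f i) \<subseteq> events" using assms(1) by (auto simp: indep_sets_def)
next
  fix J A assume J: "J \<subseteq> I" "J \<noteq> {}" "finite J" and A: "A \<in> (\<Pi> j\<in>J. F (f j))"
  define B where "B k = A (the_inv_into J f k)" for k
  have inj: "inj_on f J" using assms(2) J(1) inj_on_subset by blast
  have BA: "B (f j) = A j" if "j \<in> J" for j using inj that by (simp add: B_def the_inv_into_f_f)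
  have "B \<in> (\<Pi> k\<in>f ` J. F k)" using A BA by auto
  then have "prob (\<Inter>k\<in>f ` J. B k) = (\<Prod>k\<in>f ` J. prob (B k))"
    using assms(1) J unfolding indep_sets_def by (metis finite_imageI image_is_empty image_mono)
  moreover have "(\<Inter>k\<in>f ` J. B k) = (\<Inter>j\<in>J. A j)" using BA by auto
  moreover have "(\<Prod>k\<in>f ` J. prob (B k)) = (\<Prod>j\<in>J. prob (A j))"
    using inj BA by (simp add: prod.reindex)
  ultimately show "prob (\<Inter>j\<in>J. A j) = (\<Prod>j\<in>J. prob (A j))" by simp
qed

lemma (in prob_space) indep_vars_Inl:
  assumes "indep_vars (\<lambda>_. borel) (case_sum X Z) (Inl ` I \<union> Inr ` J)"
  shows "indep_vars (\<lambda>_. borel) X I"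
proof -
  have "indep_vars (\<lambda>_. borel) (case_sum X Z) (Inl ` I)"
    using assms by (rule indep_vars_subset) auto
  then show ?thesis
    unfolding indep_vars_def2
    using indep_sets_reindex[of "\<lambda>i. {case_sum X Z i -` A \<inter> space M |A. A \<in> sets borel}" Inl I] by auto
qed

lemma (in prob_space) sum_sq_indep:
  fixes G :: "'i \<Rightarrow> 'a \<Rightarrow> real"
  assumes I: "finite I" and ind: "indep_vars (\<lambda>_. borel) G I"
    and sq: "\<And>i. i \<in> I \<Longrightarrow> integrable M (\<lambda>\<omega>. (G i \<omega>)^2)"
    and m0: "\<And>i. i \<in> I \<Longrightarrow> expectation (G i) = 0"
  shows "integrable M (\<lambda>\<omega>. (\<Sum>i\<in>I. G i \<omega>)^2)"
    and "expectation (\<lambda>\<omega>. (\<Sum>i\<in>I. G i \<omega>)^2) = (\<Sum>i\<in>I. expectation (\<lambda>\<omega>. (G i \<omega>)^2))"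
proof -
  have rv: "G i \<in> borel_measurable M" if "i \<in> I" for i
    using ind that by (auto simp: indep_vars_def)
  have int: "integrable M (G i)" if "i \<in> I" for i
    using square_integrable_imp_integrable[OF rv[OF that] sq[OF that]] .
  have eq: "(\<lambda>\<omega>. (\<Sum>i\<in>I. G i \<omega>)^2) = (\<lambda>\<omega>. \<Sum>i\<in>I. \<Sum>j\<in>I. G i \<omega> * G j \<omega>)"
    by (simp add: power2_eq_square sum_product)
  have pij: "integrable M (\<lambda>\<omega>. G i \<omega> * G j \<omega>) \<and>
      expectation (\<lambda>\<omega>. G i \<omega> * G j \<omega>) = (if i = j then expectation (\<lambda>\<omega>. (G i \<omega>)^2) else 0)"
    if ij: "i \<in> I" "j \<in> I" for i j
  proof (cases "i = j")
    case True then show ?thesis using sq[OF ij(1)] by (simp add: power2_eq_square)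
  next
    case False
    have ind2: "indep_vars (\<lambda>_. borel) G {i, j}" using ind by (rule indep_vars_subset) (use ij in auto)
    have "integrable M (\<lambda>\<omega>. \<Prod>k\<in>{i,j}. G k \<omega>)"
      by (rule indep_vars_integrable[OF _ ind2]) (use int ij in auto)
    moreover have "expectation (\<lambda>\<omega>. \<Prod>k\<in>{i,j}. G k \<omega>) = (\<Prod>k\<in>{i,j}. expectation (G k))"
      by (rule indep_vars_lebesgue_integral[OF _ ind2]) (use int ij in auto)
    ultimately show ?thesis using False m0 ij by simp
  qed
  show "integrable M (\<lambda>\<omega>. (\<Sum>i\<in>I. G i \<omega>)^2)"
    unfolding eq
    apply (rule Bochner_Integration.integrable_sum)
    apply (rule Bochner_Integration.integrable_sum)
    using pij by auto
  have "expectation (\<lambda>\<omega>. (\<Sum>i\<in>I. G i \<omega>)^2) = (\<Sum>i\<in>I. \<Sum>j\<in>I. expectation (\<lambda>\<omega>. G i \<omega> * G j \<omega>))"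
    unfolding eq
    apply (subst Bochner_Integration.integral_sum)
     apply (rule Bochner_Integration.integrable_sum) using pij apply simp
    apply (rule sum.cong, rule refl)
    apply (rule Bochner_Integration.integral_sum) using pij by simp
  also have "\<dots> = (\<Sum>i\<in>I. \<Sum>j\<in>I. if i = j then expectation (\<lambda>\<omega>. (G i \<omega>)^2) else 0)"
    using pij by (intro sum.cong) auto
  also have "\<dots> = (\<Sum>i\<in>I. expectation (\<lambda>\<omega>. (G i \<omega>)^2))"
    using I by simp
  finally show "expectation (\<lambda>\<omega>. (\<Sum>i\<in>I. G i \<omega>)^2) = (\<Sum>i\<in>I. expectation (\<lambda>\<omega>. (G i \<omega>)^2))" .
qed

lemma (in prob_space) normal_centered_moment:
  assumes D: "distributed M lborel X (normal_density \<mu> \<sigma>)" and s: "\<sigma> > 0"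
  shows "integrable M (\<lambda>\<omega>. (X \<omega> - \<mu>)^k)"
    and "expectation (\<lambda>\<omega>. (X \<omega> - \<mu>)^k) = (\<integral>x. normal_density \<mu> \<sigma> x * (x - \<mu>)^k \<partial>lborel)"
proof -
  show "integrable M (\<lambda>\<omega>. (X \<omega> - \<mu>)^k)"
    using distributed_integrable[OF D, of "\<lambda>x. (x - \<mu>)^k"] integrable_normal_moment[OF s, of \<mu> k]
    by simp
  show "expectation (\<lambda>\<omega>. (X \<omega> - \<mu>)^k) = (\<integral>x. normal_density \<mu> \<sigma> x * (x - \<mu>)^k \<partial>lborel)"
    using distributed_integral[OF D, of "\<lambda>x. (x - \<mu>)^k"] by simp
qed

lemma (in prob_space) normal_moments:
  assumes D: "distributed M lborel X (normal_density \<mu> \<sigma>)" and s: "\<sigma> > 0"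
  shows "expectation (\<lambda>\<omega>. (X \<omega> - \<mu>)) = 0"
    and "expectation (\<lambda>\<omega>. (X \<omega> - \<mu>)^2) = \<sigma>^2"
    and "expectation (\<lambda>\<omega>. (X \<omega> - \<mu>)^4) = 3 * \<sigma>^4"
proof -
  show "expectation (\<lambda>\<omega>. (X \<omega> - \<mu>)) = 0"
    using normal_centered_moment(2)[OF D s, of 1] integral_normal_moment_odd[OF s, of \<mu> 0] by simp
  show "expectation (\<lambda>\<omega>. (X \<omega> - \<mu>)^2) = \<sigma>^2"
    using normal_centered_moment(2)[OF D s, of 2] integral_normal_moment_even[OF s, of \<mu> 1] by simp
  show "expectation (\<lambda>\<omega>. (X \<omega> - \<mu>)^4) = 3 * \<sigma>^4"
    using normal_centered_moment(2)[OF D s, of 4] integral_normal_moment_even[OF s, of \<mu> 2]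
    by (simp add: numeral_eq_Suc power_divide field_simps)
qed

locale sett = seqprob M
  for M :: "nat \<Rightarrow> 'a measure" +
  fixes \<sigma>e \<beta>1 \<beta>2 cx cx2 \<eta> :: real
    and x :: "nat \<Rightarrow> nat \<Rightarrow> real"
    and \<Delta> \<rho> :: "nat \<Rightarrow> real"
    and Y :: "nat \<Rightarrow> nat \<Rightarrow> 'a \<Rightarrow> real"
    and Z :: "nat \<Rightarrow> nat \<Rightarrow> 'a \<Rightarrow> real"
  assumes sigma_pos: "\<sigma>e > 0"
    and Delta_pos: "\<And>n. \<Delta> n > 0"
    and rho_pos: "\<And>n. \<rho> n > 0"
    and Y_distr: "\<And>n i. n > 2 \<Longrightarrow> i < n \<Longrightarrow>
        distributed (M n) lborel (Y n i) (\<lambda>t. ennreal (normal_density (\<beta>2 + \<beta>1 * x n i) \<sigma>e t))"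
    and Z_distr: "\<And>n k. n > 2 \<Longrightarrow> k < 5 \<Longrightarrow>
        distributed (M n) lborel (Z n k) (\<lambda>t. ennreal (std_normal_density t))"
    and indep: "\<And>n. n > 2 \<Longrightarrow>
        prob_space.indep_vars (M n) (\<lambda>_. borel) (case_sum (Y n) (Z n)) (Inl ` {..<n} \<union> Inr ` {..<5})"
    and xbar_lim: "(\<lambda>n. (\<Sum>i<n. x n i) / real n) \<longlonglongrightarrow> cx"
    and x2bar_lim: "(\<lambda>n. (\<Sum>i<n. (x n i)^2) / real n) \<longlonglongrightarrow> cx2"
    and c_ineq: "cx2 > cx^2"
    and eta_lim: "(\<lambda>n. (\<Sum>i<n. ((\<beta>2 + \<beta>1 * x n i)
                       - ((\<beta>2 + \<beta>1 * ((\<Sum>j<n. x n j) / real n)) + 0 * x n i))^2) / \<sigma>e^2)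
                  \<longlonglongrightarrow> \<eta>^2"
    and Delta_rho1: "(\<lambda>n. (\<Delta> n)^2 / (\<rho> n * real n)) \<longlonglongrightarrow> 0"
    and Delta_rho2: "(\<lambda>n. (\<Delta> n)^4 / (\<rho> n * real n)) \<longlonglongrightarrow> 0"
    and y_clip: "(\<lambda>n. measure (M n) {\<omega> \<in> space (M n). \<exists>i<n. Y n i \<omega> \<notin> {-\<Delta> n..\<Delta> n}}) \<longlonglongrightarrow> 0"
    and x_in: "\<And>n i. n > 2 \<Longrightarrow> i < n \<Longrightarrow> x n i \<in> {-\<Delta> n..\<Delta> n}"
begin

definition "mu n i = \<beta>2 + \<beta>1 * x n i"
definition "xb n = (\<Sum>i<n. x n i) / real n"
definition "x2b n = (\<Sum>i<n. (x n i)^2) / real n"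

lemma Y_meas: "n > 2 \<Longrightarrow> i < n \<Longrightarrow> Y n i \<in> borel_measurable (M n)"
  using Y_distr[of n i] by (auto dest: distributed_measurable)

lemma Z_meas: "n > 2 \<Longrightarrow> k < 5 \<Longrightarrow> Z n k \<in> borel_measurable (M n)"
  using Z_distr[of n k] by (auto dest: distributed_measurable)

lemma indepY: "n > 2 \<Longrightarrow> prob_space.indep_vars (M n) (\<lambda>_. borel) (Y n) {..<n}"
  using prob_space.indep_vars_Inl[OF prob indep] by blast

lemma noise_cip:
  assumes k: "k < 5" and a: "(\<lambda>n. (a n)^2) \<longlonglongrightarrow> 0"
  shows "cip (\<lambda>n \<omega>. a n * Z n k \<omega>) 0"
proof (rule cip_L2)
  show "\<forall>\<^sub>F n in sequentially. (\<lambda>\<omega>. a n * Z n k \<omega>) \<in> borel_measurable (M n)"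
    using ev_gt2 by eventually_elim (use Z_meas k in measurable)
  have mom: "integrable (M n) (\<lambda>\<omega>. (Z n k \<omega>)^2) \<and> (\<integral>\<omega>. (Z n k \<omega>)^2 \<partial>M n) = 1" if "n > 2" for n
  proof -
    have P: "prob_space (M n)" using prob that by auto
    have D: "distributed (M n) lborel (Z n k) (normal_density 0 1)" using Z_distr that k by auto
    show ?thesis
      using prob_space.normal_centered_moment(1)[OF P D, of 2] prob_space.normal_moments(2)[OF P D] by simp
  qed
  have "\<forall>\<^sub>F n in sequentially. integrable (M n) (\<lambda>\<omega>. (a n * Z n k \<omega>)^2) \<and>
       (\<integral>\<omega>. (a n * Z n k \<omega>)^2 \<partial>M n) = (a n)^2"
    using ev_gt2 by eventually_elim (use mom in \<open>simp add: power_mult_distrib\<close>)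
  then have "\<forall>\<^sub>F n in sequentially. integrable (M n) (\<lambda>\<omega>. (a n * Z n k \<omega>)^2)"
    and ev2: "\<forall>\<^sub>F n in sequentially. (\<integral>\<omega>. (a n * Z n k \<omega>)^2 \<partial>M n) = (a n)^2"
    by (auto elim: eventually_mono)
  then show "\<forall>\<^sub>F n in sequentially. integrable (M n) (\<lambda>\<omega>. (a n * Z n k \<omega>)^2)" by -
  show "(\<lambda>n. \<integral>\<omega>. (a n * Z n k \<omega>)^2 \<partial>M n) \<longlonglongrightarrow> 0"
    by (subst tendsto_cong[OF ev2]) (rule a)
qed


lemma Y_normal:
  assumes "n > 2" "i < n"
  shows "distributed (M n) lborel (Y n i) (normal_density (mu n i) \<sigma>e)"
  using Y_distr[OF assms] by (simp add: mu_def)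

lemma Y_mom:
  assumes "n > 2" "i < n"
  shows "integrable (M n) (\<lambda>\<omega>. (Y n i \<omega> - mu n i)^k)"
    "(\<integral>\<omega>. (Y n i \<omega> - mu n i) \<partial>M n) = 0"
    "(\<integral>\<omega>. (Y n i \<omega> - mu n i)^2 \<partial>M n) = \<sigma>e^2"
    "(\<integral>\<omega>. (Y n i \<omega> - mu n i)^4 \<partial>M n) = 3 * \<sigma>e^4"
  using prob_space.normal_centered_moment(1)[OF prob[OF assms(1)] Y_normal[OF assms] sigma_pos]
    prob_space.normal_moments[OF prob[OF assms(1)] Y_normal[OF assms] sigma_pos] by auto

lemma Y_mom1: "n > 2 \<Longrightarrow> i < n \<Longrightarrow> integrable (M n) (\<lambda>\<omega>. (Y n i \<omega> - mu n i))"
  using Y_mom(1)[of n i 1] by simp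

lemma lin_cip:
  assumes a: "(\<lambda>n. \<Sum>i<n. (a n i)^2) \<longlonglongrightarrow> 0"
  shows "cip (\<lambda>n \<omega>. \<Sum>i<n. a n i * (Y n i \<omega> - mu n i)) 0"
proof (rule cip_L2)
  show "\<forall>\<^sub>F n in sequentially. (\<lambda>\<omega>. \<Sum>i<n. a n i * (Y n i \<omega> - mu n i)) \<in> borel_measurable (M n)"
    using ev_gt2 by eventually_elim (use Y_meas in auto)
  have key: "integrable (M n) (\<lambda>\<omega>. (\<Sum>i<n. a n i * (Y n i \<omega> - mu n i))^2) \<and>
     (\<integral>\<omega>. (\<Sum>i<n. a n i * (Y n i \<omega> - mu n i))^2 \<partial>M n) = \<sigma>e^2 * (\<Sum>i<n. (a n i)^2)" if n: "n > 2" for n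
  proof -
    interpret P: prob_space "M n" using prob n by auto
    have ind: "P.indep_vars (\<lambda>_. borel) (\<lambda>i \<omega>. a n i * (Y n i \<omega> - mu n i)) {..<n}"
      by (rule P.indep_vars_compose2[OF indepY[OF n]]) auto
    have sq: "integrable (M n) (\<lambda>\<omega>. (a n i * (Y n i \<omega> - mu n i))^2)" if "i \<in> {..<n}" for i
      using Y_mom(1)[OF n, of i 2] that by (simp add: power_mult_distrib)
    have m0: "P.expectation (\<lambda>\<omega>. a n i * (Y n i \<omega> - mu n i)) = 0" if "i \<in> {..<n}" for i
      using Y_mom(2)[OF n, of i] that by simp
    have v: "P.expectation (\<lambda>\<omega>. (a n i * (Y n i \<omega> - mu n i))^2) = (a n i)^2 * \<sigma>e^2" if "i \<in> {..<n}" for i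
      using Y_mom(3)[OF n, of i] that by (simp add: power_mult_distrib)
    show ?thesis
      using P.sum_sq_indep[OF _ ind sq m0] v by (simp add: sum_distrib_left mult.commute)
  qed
  show "\<forall>\<^sub>F n in sequentially. integrable (M n) (\<lambda>\<omega>. (\<Sum>i<n. a n i * (Y n i \<omega> - mu n i))^2)"
    using ev_gt2 by eventually_elim (use key in auto)
  have ev: "\<forall>\<^sub>F n in sequentially. (\<integral>\<omega>. (\<Sum>i<n. a n i * (Y n i \<omega> - mu n i))^2 \<partial>M n) = \<sigma>e^2 * (\<Sum>i<n. (a n i)^2)"
    using ev_gt2 by eventually_elim (use key in auto)
  show "(\<lambda>n. \<integral>\<omega>. (\<Sum>i<n. a n i * (Y n i \<omega> - mu n i))^2 \<partial>M n) \<longlonglongrightarrow> 0"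
    by (subst tendsto_cong[OF ev]) (rule tendsto_mult_right_zero[OF a])
qed

lemma quad_cip:
  shows "cip (\<lambda>n \<omega>. \<Sum>i<n. ((Y n i \<omega> - mu n i)^2 - \<sigma>e^2) / real n) 0"
proof (rule cip_L2)
  show "\<forall>\<^sub>F n in sequentially. (\<lambda>\<omega>. \<Sum>i<n. ((Y n i \<omega> - mu n i)^2 - \<sigma>e^2) / real n) \<in> borel_measurable (M n)"
    using ev_gt2 by eventually_elim (use Y_meas in auto)
  have key: "integrable (M n) (\<lambda>\<omega>. (\<Sum>i<n. ((Y n i \<omega> - mu n i)^2 - \<sigma>e^2) / real n)^2) \<and>
     (\<integral>\<omega>. (\<Sum>i<n. ((Y n i \<omega> - mu n i)^2 - \<sigma>e^2) / real n)^2 \<partial>M n) = 2 * \<sigma>e^4 / real n" if n: "n > 2" for n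
  proof -
    interpret P: prob_space "M n" using prob n by auto
    have ind: "P.indep_vars (\<lambda>_. borel) (\<lambda>i \<omega>. ((Y n i \<omega> - mu n i)^2 - \<sigma>e^2) / real n) {..<n}"
      by (rule P.indep_vars_compose2[OF indepY[OF n]]) auto
    have eq: "(((Y n i \<omega> - mu n i)^2 - \<sigma>e^2) / real n)^2 =
       ((Y n i \<omega> - mu n i)^4 - 2 * \<sigma>e^2 * (Y n i \<omega> - mu n i)^2 + \<sigma>e^4) / (real n)^2" for i \<omega>
      by (simp add: power_divide) (simp add: power2_eq_square power4_eq_xxxx algebra_simps)
    have sq: "integrable (M n) (\<lambda>\<omega>. (((Y n i \<omega> - mu n i)^2 - \<sigma>e^2) / real n)^2)" if "i \<in> {..<n}" for i
      unfolding eq using Y_mom(1)[OF n, of i 2] Y_mom(1)[OF n, of i 4] that by auto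
    have m0: "P.expectation (\<lambda>\<omega>. ((Y n i \<omega> - mu n i)^2 - \<sigma>e^2) / real n) = 0" if "i \<in> {..<n}" for i
      using Y_mom(1)[OF n, of i 2] Y_mom(3)[OF n, of i] that by (simp add: Bochner_Integration.integral_diff P.prob_space)
    have v: "P.expectation (\<lambda>\<omega>. (((Y n i \<omega> - mu n i)^2 - \<sigma>e^2) / real n)^2) = 2 * \<sigma>e^4 / (real n)^2"
      if "i \<in> {..<n}" for i
      unfolding eq using Y_mom(1)[OF n, of i 2] Y_mom(1)[OF n, of i 4] Y_mom(3,4)[OF n, of i] that
      by (simp add: Bochner_Integration.integral_diff Bochner_Integration.integral_add P.prob_space power2_eq_square power4_eq_xxxx)
    show ?thesis
      using P.sum_sq_indep[OF _ ind sq m0] v n by (simp add: power2_eq_square)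
  qed
  show "\<forall>\<^sub>F n in sequentially. integrable (M n) (\<lambda>\<omega>. (\<Sum>i<n. ((Y n i \<omega> - mu n i)^2 - \<sigma>e^2) / real n)^2)"
    using ev_gt2 by eventually_elim (use key in auto)
  have ev: "\<forall>\<^sub>F n in sequentially. (\<integral>\<omega>. (\<Sum>i<n. ((Y n i \<omega> - mu n i)^2 - \<sigma>e^2) / real n)^2 \<partial>M n) = 2 * \<sigma>e^4 / real n"
    using ev_gt2 by eventually_elim (use key in auto)
  show "(\<lambda>n. \<integral>\<omega>. (\<Sum>i<n. ((Y n i \<omega> - mu n i)^2 - \<sigma>e^2) / real n)^2 \<partial>M n) \<longlonglongrightarrow> 0"
    by (subst tendsto_cong[OF ev]) real_asymp
qed


definition "XT n \<omega> = xbar_t (\<Delta> n) (\<rho> n) n (x n) (\<lambda>i. Y n i \<omega>) (\<lambda>k. Z n k \<omega>)"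
definition "YT n \<omega> = ybar_t (\<Delta> n) (\<rho> n) n (x n) (\<lambda>i. Y n i \<omega>) (\<lambda>k. Z n k \<omega>)"
definition "X2T n \<omega> = x2bar_t (\<Delta> n) (\<rho> n) n (x n) (\<lambda>i. Y n i \<omega>) (\<lambda>k. Z n k \<omega>)"
definition "XYT n \<omega> = xybar_t (\<Delta> n) (\<rho> n) n (x n) (\<lambda>i. Y n i \<omega>) (\<lambda>k. Z n k \<omega>)"
definition "Y2T n \<omega> = y2bar_t (\<Delta> n) (\<rho> n) n (x n) (\<lambda>i. Y n i \<omega>) (\<lambda>k. Z n k \<omega>)"
definition "c0 n = sqrt (2 * (\<Delta> n)^2 / ((\<rho> n / 5) * (real n)^2))"
definition "c2 n = sqrt ((\<Delta> n)^4 / (2 * (\<rho> n / 5) * (real n)^2))"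
definition "c3 n = sqrt (2 * (\<Delta> n)^4 / ((\<rho> n / 5) * (real n)^2))"
definition "Bad n \<omega> \<longleftrightarrow> (\<exists>i<n. Y n i \<omega> \<notin> {-\<Delta> n..\<Delta> n})"

lemma nc_lim:
  shows "(\<lambda>n. real n * (c0 n)^2) \<longlonglongrightarrow> 0" "(\<lambda>n. real n * (c2 n)^2) \<longlonglongrightarrow> 0"
    "(\<lambda>n. real n * (c3 n)^2) \<longlonglongrightarrow> 0"
proof -
  have r: "\<rho> n > 0" "\<Delta> n > 0" for n using rho_pos Delta_pos by auto
  have e0: "\<forall>\<^sub>F n in sequentially. real n * (c0 n)^2 = 10 * ((\<Delta> n)^2 / (\<rho> n * real n))"
    using ev_gt2 by eventually_elim (use r in \<open>simp add: c0_def power2_eq_square field_simps abs_mult abs_of_pos[OF rho_pos] abs_of_pos[OF Delta_pos]\<close>)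
  have e2: "\<forall>\<^sub>F n in sequentially. real n * (c2 n)^2 = 5/2 * ((\<Delta> n)^4 / (\<rho> n * real n))"
    using ev_gt2 by eventually_elim (use r in \<open>simp add: c2_def power2_eq_square field_simps abs_mult abs_of_pos[OF rho_pos] abs_of_pos[OF Delta_pos]\<close>)
  have e3: "\<forall>\<^sub>F n in sequentially. real n * (c3 n)^2 = 10 * ((\<Delta> n)^4 / (\<rho> n * real n))"
    using ev_gt2 by eventually_elim (use r in \<open>simp add: c3_def power2_eq_square field_simps abs_mult abs_of_pos[OF rho_pos] abs_of_pos[OF Delta_pos]\<close>)
  show "(\<lambda>n. real n * (c0 n)^2) \<longlonglongrightarrow> 0"
    by (subst tendsto_cong[OF e0]) (rule tendsto_mult_right_zero[OF Delta_rho1])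
  show "(\<lambda>n. real n * (c2 n)^2) \<longlonglongrightarrow> 0"
    by (subst tendsto_cong[OF e2]) (rule tendsto_mult_right_zero[OF Delta_rho2])
  show "(\<lambda>n. real n * (c3 n)^2) \<longlonglongrightarrow> 0"
    by (subst tendsto_cong[OF e3]) (rule tendsto_mult_right_zero[OF Delta_rho2])
qed

lemma c_lim_aux:
  assumes "(\<lambda>n. real n * (c n)^2) \<longlonglongrightarrow> 0"
  shows "(\<lambda>n. (c n)^2) \<longlonglongrightarrow> 0" "(\<lambda>n. (sqrt (real n) * c n)^2) \<longlonglongrightarrow> 0"
proof -
  have "\<forall>\<^sub>F n in sequentially. 0 \<le> (c n)^2 \<and> (c n)^2 \<le> real n * (c n)^2"
    using ev_gt2 by eventually_elim (auto intro: mult_le_cancel_right1[THEN iffD2])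
  then show "(\<lambda>n. (c n)^2) \<longlonglongrightarrow> 0" using assms by (rule lim0_sandwich)
  show "(\<lambda>n. (sqrt (real n) * c n)^2) \<longlonglongrightarrow> 0" using assms by (simp add: power_mult_distrib)
qed

lemma Bad_meas: "n > 2 \<Longrightarrow> {\<omega> \<in> space (M n). Bad n \<omega>} \<in> sets (M n)"
proof -
  assume n: "n > 2"
  have "{\<omega> \<in> space (M n). Bad n \<omega>} = (\<Union>i<n. {\<omega> \<in> space (M n). Y n i \<omega> \<notin> {-\<Delta> n..\<Delta> n}})"
    by (auto simp: Bad_def)
  also have "\<dots> \<in> sets (M n)"
  proof (intro sets.finite_UN, simp)
    fix i assume "i \<in> {..<n}"
    then have [measurable]: "Y n i \<in> borel_measurable (M n)" using Y_meas n by auto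
    show "{\<omega> \<in> space (M n). Y n i \<omega> \<notin> {-\<Delta> n..\<Delta> n}} \<in> sets (M n)" by measurable
  qed
  finally show ?thesis .
qed

lemma Bad_lim: "(\<lambda>n. measure (M n) {\<omega> \<in> space (M n). Bad n \<omega>}) \<longlonglongrightarrow> 0"
  using y_clip by (simp add: Bad_def)

lemma clip_id: "a \<le> z \<Longrightarrow> z \<le> b \<Longrightarrow> clip a b z = z"
  by (simp add: clip_def)

lemma clip_meas[measurable]: "f \<in> borel_measurable N \<Longrightarrow> (\<lambda>\<omega>. clip a b (f \<omega>)) \<in> borel_measurable N"
  unfolding clip_def by (intro borel_measurable_max borel_measurable_min) auto

lemma sum_clip_x: "n > 2 \<Longrightarrow> (\<Sum>i<n. clip (-\<Delta> n) (\<Delta> n) (x n i)) = (\<Sum>i<n. x n i)"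
  using x_in by (intro sum.cong refl clip_id) auto

lemma x_sq_le: "n > 2 \<Longrightarrow> i < n \<Longrightarrow> (x n i)^2 \<le> (\<Delta> n)^2"
  using x_in[of n i] Delta_pos[of n] by (subst abs_le_square_iff[symmetric]) auto


lemma sum_mu: "n > 0 \<Longrightarrow> (\<Sum>i<n. mu n i) / real n = \<beta>2 + \<beta>1 * xb n"
  by (simp add: mu_def xb_def sum.distrib sum_distrib_left[symmetric] field_simps)

lemma sum_mu2: "n > 0 \<Longrightarrow> (\<Sum>i<n. (mu n i)^2) / real n = \<beta>2^2 + 2 * \<beta>2 * \<beta>1 * xb n + \<beta>1^2 * x2b n"
proof -
  assume n: "n > 0"
  have "(\<Sum>i<n. (mu n i)^2) = (\<Sum>i<n. \<beta>2^2 + (2 * \<beta>2 * \<beta>1) * x n i + \<beta>1^2 * (x n i)^2)"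
    by (intro sum.cong) (auto simp: mu_def power2_eq_square algebra_simps)
  also have "\<dots> = real n * \<beta>2^2 + (2 * \<beta>2 * \<beta>1) * (\<Sum>i<n. x n i) + \<beta>1^2 * (\<Sum>i<n. (x n i)^2)"
    by (simp add: sum.distrib sum_distrib_left)
  finally show ?thesis using n by (simp add: xb_def x2b_def field_simps)
qed

lemma xb_lim: "xb \<longlonglongrightarrow> cx" using xbar_lim by (simp add: xb_def[abs_def])
lemma x2b_lim: "x2b \<longlonglongrightarrow> cx2" using x2bar_lim by (simp add: x2b_def[abs_def])

lemma dev_cip:
  assumes meas: "\<And>n. n > 2 \<Longrightarrow> D n \<in> borel_measurable (M n)"
    and z: "\<And>n \<omega>. n > 2 \<Longrightarrow> \<omega> \<in> space (M n) \<Longrightarrow> \<not> Bad n \<omega> \<Longrightarrow> D n \<omega> = 0"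
  shows "cip D 0"
proof (rule cip_zero_outside[where Q=Bad])
  show "\<forall>\<^sub>F n in sequentially. D n \<in> borel_measurable (M n)" using ev_gt2 by eventually_elim (rule meas)
  show "\<forall>\<^sub>F n in sequentially. {\<omega> \<in> space (M n). Bad n \<omega>} \<in> sets (M n)"
    using ev_gt2 by eventually_elim (rule Bad_meas)
  show "\<forall>\<^sub>F n in sequentially. \<forall>\<omega>\<in>space (M n). D n \<omega> \<noteq> 0 \<longrightarrow> Bad n \<omega>"
    using ev_gt2 by eventually_elim (use z in blast)
qed (rule Bad_lim)

lemma XT_eq: "n > 2 \<Longrightarrow> XT n \<omega> = xb n + c0 n * Z n 0 \<omega>"
  by (simp add: XT_def xbar_t_def sum_clip_x c0_def xb_def)

lemma X2T_eq: "n > 2 \<Longrightarrow> X2T n \<omega> = x2b n + c2 n * Z n 2 \<omega>"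
proof -
  assume n: "n > 2"
  have "(\<Sum>i<n. clip 0 ((\<Delta> n)^2) ((x n i)^2)) = (\<Sum>i<n. (x n i)^2)"
    using x_sq_le[OF n] by (intro sum.cong refl clip_id) auto
  then show ?thesis by (simp add: X2T_def x2bar_t_def c2_def x2b_def)
qed

lemma XT_cip: "cip XT cx"
proof -
  have "cip (\<lambda>n \<omega>. xb n + c0 n * Z n 0 \<omega>) (cx + 0)"
    by (intro cip_add cip_const xb_lim noise_cip c_lim_aux(1) nc_lim) auto
  then have "cip (\<lambda>n \<omega>. xb n + c0 n * Z n 0 \<omega>) cx" by simp
  moreover have "\<forall>\<^sub>F n in sequentially. \<forall>\<omega>\<in>space (M n). xb n + c0 n * Z n 0 \<omega> = XT n \<omega>"
    using ev_gt2 by eventually_elim (simp add: XT_eq)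
  ultimately show ?thesis by (rule cip_cong_ev)
qed

lemma X2T_cip: "cip X2T cx2"
proof -
  have "cip (\<lambda>n \<omega>. x2b n + c2 n * Z n 2 \<omega>) (cx2 + 0)"
    by (intro cip_add cip_const x2b_lim noise_cip c_lim_aux(1) nc_lim) auto
  then have "cip (\<lambda>n \<omega>. x2b n + c2 n * Z n 2 \<omega>) cx2" by simp
  moreover have "\<forall>\<^sub>F n in sequentially. \<forall>\<omega>\<in>space (M n). x2b n + c2 n * Z n 2 \<omega> = X2T n \<omega>"
    using ev_gt2 by eventually_elim (simp add: X2T_eq)
  ultimately show ?thesis by (rule cip_cong_ev)
qed

definition "DY n \<omega> = (\<Sum>i<n. clip (-\<Delta> n) (\<Delta> n) (Y n i \<omega>) - Y n i \<omega>) / real n"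
definition "DXY n \<omega> = (\<Sum>i<n. clip (-((\<Delta> n)^2)) ((\<Delta> n)^2) (x n i * Y n i \<omega>) - x n i * Y n i \<omega>) / real n"
definition "DY2 n \<omega> = (\<Sum>i<n. clip 0 ((\<Delta> n)^2) ((Y n i \<omega>)^2) - (Y n i \<omega>)^2) / real n"

lemma good_Y: "\<not> Bad n \<omega> \<Longrightarrow> i < n \<Longrightarrow> \<bar>Y n i \<omega>\<bar> \<le> \<Delta> n"
  by (auto simp: Bad_def)

lemma DY_cip: "cip DY 0"
proof (rule dev_cip)
  fix n :: nat assume "n > 2"
  then show "DY n \<in> borel_measurable (M n)"
    unfolding DY_def[abs_def] using Y_meas by (auto intro!: borel_measurable_sum)
next
  fix n :: nat and \<omega> assume "n > 2" and g: "\<not> Bad n \<omega>"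
  have "clip (-\<Delta> n) (\<Delta> n) (Y n i \<omega>) = Y n i \<omega>" if "i < n" for i
    using good_Y[OF g that] by (intro clip_id) auto
  then show "DY n \<omega> = 0" unfolding DY_def by simp
qed

lemma DXY_cip: "cip DXY 0"
proof (rule dev_cip)
  fix n :: nat assume "n > 2"
  then show "DXY n \<in> borel_measurable (M n)"
    unfolding DXY_def[abs_def] using Y_meas by (auto intro!: borel_measurable_sum)
next
  fix n :: nat and \<omega> assume n: "n > 2" and g: "\<not> Bad n \<omega>"
  have "\<bar>x n i * Y n i \<omega>\<bar> \<le> (\<Delta> n)^2" if "i < n" for i
  proof -
    have "\<bar>x n i\<bar> \<le> \<Delta> n" using x_in[OF n that] by auto
    then have "\<bar>x n i\<bar> * \<bar>Y n i \<omega>\<bar> \<le> \<Delta> n * \<Delta> n"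
      using good_Y[OF g that] by (intro mult_mono) auto
    then show ?thesis by (simp add: abs_mult power2_eq_square)
  qed
  note bnd = this
  have "clip (-((\<Delta> n)^2)) ((\<Delta> n)^2) (x n i * Y n i \<omega>) = x n i * Y n i \<omega>" if "i < n" for i
    using bnd[OF that] by (intro clip_id) (auto simp: abs_le_iff)
  then show "DXY n \<omega> = 0" unfolding DXY_def by simp
qed

lemma DY2_cip: "cip DY2 0"
proof (rule dev_cip)
  fix n :: nat assume "n > 2"
  then show "DY2 n \<in> borel_measurable (M n)"
    unfolding DY2_def[abs_def] using Y_meas by (auto intro!: borel_measurable_sum)
next
  fix n :: nat and \<omega> assume n: "n > 2" and g: "\<not> Bad n \<omega>"
  have "(Y n i \<omega>)^2 \<le> (\<Delta> n)^2" if "i < n" for i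
    using good_Y[OF g that] Delta_pos[of n] by (subst abs_le_square_iff[symmetric]) auto
  then show "DY2 n \<omega> = 0" unfolding DY2_def
    by (auto intro!: sum.neutral clip_id)
qed

lemma YT_eq: "n > 2 \<Longrightarrow> YT n \<omega> = (\<beta>2 + \<beta>1 * xb n) + (\<Sum>i<n. (1 / real n) * (Y n i \<omega> - mu n i))
   + c0 n * Z n 1 \<omega> + DY n \<omega>"
proof -
  assume n: "n > 2"
  have "(\<Sum>i<n. (1 / real n) * (Y n i \<omega> - mu n i)) = (\<Sum>i<n. Y n i \<omega>) / real n - (\<Sum>i<n. mu n i) / real n"
    by (simp add: sum_divide_distrib sum_subtractf diff_divide_distrib)
  moreover have "DY n \<omega> = (\<Sum>i<n. clip (-\<Delta> n) (\<Delta> n) (Y n i \<omega>)) / real n - (\<Sum>i<n. Y n i \<omega>) / real n"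
    by (simp add: DY_def sum_subtractf diff_divide_distrib)
  ultimately show ?thesis using sum_mu[of n] n
    by (simp add: YT_def ybar_t_def c0_def)
qed

lemma XYT_eq: "n > 2 \<Longrightarrow> XYT n \<omega> = (\<beta>2 * xb n + \<beta>1 * x2b n) + (\<Sum>i<n. (x n i / real n) * (Y n i \<omega> - mu n i))
   + c3 n * Z n 3 \<omega> + DXY n \<omega>"
proof -
  assume n: "n > 2"
  have "(\<Sum>i<n. (x n i / real n) * (Y n i \<omega> - mu n i)) = (\<Sum>i<n. x n i * Y n i \<omega>) / real n - (\<Sum>i<n. x n i * mu n i) / real n"
    by (simp add: sum_divide_distrib[symmetric] sum_subtractf diff_divide_distrib algebra_simps)
  moreover have "(\<Sum>i<n. x n i * mu n i) / real n = \<beta>2 * xb n + \<beta>1 * x2b n"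
    by (simp add: mu_def xb_def x2b_def algebra_simps sum.distrib sum_distrib_left power2_eq_square add_divide_distrib)
  moreover have "DXY n \<omega> = (\<Sum>i<n. clip (-((\<Delta> n)^2)) ((\<Delta> n)^2) (x n i * Y n i \<omega>)) / real n - (\<Sum>i<n. x n i * Y n i \<omega>) / real n"
    by (simp add: DXY_def sum_subtractf diff_divide_distrib)
  ultimately show ?thesis using n
    by (simp add: XYT_def xybar_t_def c3_def)
qed

lemma Y2T_eq: "n > 2 \<Longrightarrow> Y2T n \<omega> = (\<beta>2^2 + 2 * \<beta>2 * \<beta>1 * xb n + \<beta>1^2 * x2b n + \<sigma>e^2)
   + (\<Sum>i<n. (2 * mu n i / real n) * (Y n i \<omega> - mu n i))
   + (\<Sum>i<n. ((Y n i \<omega> - mu n i)^2 - \<sigma>e^2) / real n)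
   + c2 n * Z n 4 \<omega> + DY2 n \<omega>"
proof -
  assume n: "n > 2"
  have "(\<Sum>i<n. (Y n i \<omega>)^2) / real n = (\<Sum>i<n. (mu n i)^2) / real n
     + (\<Sum>i<n. (2 * mu n i / real n) * (Y n i \<omega> - mu n i))
     + (\<Sum>i<n. ((Y n i \<omega> - mu n i)^2 - \<sigma>e^2) / real n) + \<sigma>e^2"
  proof -
    have "(\<Sum>i<n. (Y n i \<omega>)^2) / real n = (\<Sum>i<n. ((mu n i)^2 / real n
       + (2 * mu n i / real n) * (Y n i \<omega> - mu n i) + ((Y n i \<omega> - mu n i)^2 - \<sigma>e^2) / real n) + \<sigma>e^2 / real n)"
      unfolding sum_divide_distrib by (intro sum.cong) (auto simp: power2_eq_square field_simps)
    also have "\<dots> = (\<Sum>i<n. (mu n i)^2) / real n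
     + (\<Sum>i<n. (2 * mu n i / real n) * (Y n i \<omega> - mu n i))
     + (\<Sum>i<n. ((Y n i \<omega> - mu n i)^2 - \<sigma>e^2) / real n) + \<sigma>e^2"
      using n by (simp add: sum.distrib sum_divide_distrib)
    finally show ?thesis .
  qed
  moreover have "DY2 n \<omega> = (\<Sum>i<n. clip 0 ((\<Delta> n)^2) ((Y n i \<omega>)^2)) / real n - (\<Sum>i<n. (Y n i \<omega>)^2) / real n"
    by (simp add: DY2_def sum_subtractf diff_divide_distrib)
  ultimately show ?thesis using n sum_mu2[of n]
    by (simp add: Y2T_def y2bar_t_def c2_def)
qed


lemma inv_n_lim: "(\<lambda>n. 1 / real n) \<longlonglongrightarrow> 0" by real_asymp

lemma YT_cip: "cip YT (\<beta>2 + \<beta>1 * cx)"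
proof -
  have s: "(\<lambda>n. \<Sum>i<n. (1 / real n)^2) \<longlonglongrightarrow> 0"
  proof -
    have "(\<lambda>n. \<Sum>i<n. (1 / real n)^2) = (\<lambda>n. real n * (1 / real n)^2)" by simp
    also have "\<dots> \<longlonglongrightarrow> 0" by real_asymp
    finally show ?thesis .
  qed
  have "cip (\<lambda>n \<omega>. (\<beta>2 + \<beta>1 * xb n) + (\<Sum>i<n. (1 / real n) * (Y n i \<omega> - mu n i))
   + c0 n * Z n 1 \<omega> + DY n \<omega>) ((\<beta>2 + \<beta>1 * cx) + 0 + 0 + 0)"
    by (intro cip_add cip_const tendsto_intros xb_lim lin_cip s noise_cip c_lim_aux(1) nc_lim DY_cip) auto
  then have "cip (\<lambda>n \<omega>. (\<beta>2 + \<beta>1 * xb n) + (\<Sum>i<n. (1 / real n) * (Y n i \<omega> - mu n i))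
   + c0 n * Z n 1 \<omega> + DY n \<omega>) (\<beta>2 + \<beta>1 * cx)" by simp
  moreover have "\<forall>\<^sub>F n in sequentially. \<forall>\<omega>\<in>space (M n). (\<beta>2 + \<beta>1 * xb n) + (\<Sum>i<n. (1 / real n) * (Y n i \<omega> - mu n i))
   + c0 n * Z n 1 \<omega> + DY n \<omega> = YT n \<omega>"
    using ev_gt2 by eventually_elim (simp add: YT_eq)
  ultimately show ?thesis by (rule cip_cong_ev)
qed

lemma XYT_cip: "cip XYT (\<beta>2 * cx + \<beta>1 * cx2)"
proof -
  have s: "(\<lambda>n. \<Sum>i<n. (x n i / real n)^2) \<longlonglongrightarrow> 0"
  proof -
    have "(\<lambda>n. \<Sum>i<n. (x n i / real n)^2) = (\<lambda>n. x2b n * (1 / real n))"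
      by (auto simp: x2b_def power_divide sum_divide_distrib[symmetric] power2_eq_square)
    also have "\<dots> \<longlonglongrightarrow> cx2 * 0" by (intro tendsto_intros x2b_lim inv_n_lim)
    finally show ?thesis by simp
  qed
  have "cip (\<lambda>n \<omega>. (\<beta>2 * xb n + \<beta>1 * x2b n) + (\<Sum>i<n. (x n i / real n) * (Y n i \<omega> - mu n i))
   + c3 n * Z n 3 \<omega> + DXY n \<omega>) ((\<beta>2 * cx + \<beta>1 * cx2) + 0 + 0 + 0)"
    by (intro cip_add cip_const tendsto_intros xb_lim x2b_lim lin_cip s noise_cip c_lim_aux(1) nc_lim DXY_cip) auto
  then have "cip (\<lambda>n \<omega>. (\<beta>2 * xb n + \<beta>1 * x2b n) + (\<Sum>i<n. (x n i / real n) * (Y n i \<omega> - mu n i))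
   + c3 n * Z n 3 \<omega> + DXY n \<omega>) (\<beta>2 * cx + \<beta>1 * cx2)" by simp
  moreover have "\<forall>\<^sub>F n in sequentially. \<forall>\<omega>\<in>space (M n). (\<beta>2 * xb n + \<beta>1 * x2b n) + (\<Sum>i<n. (x n i / real n) * (Y n i \<omega> - mu n i))
   + c3 n * Z n 3 \<omega> + DXY n \<omega> = XYT n \<omega>"
    using ev_gt2 by eventually_elim (simp add: XYT_eq)
  ultimately show ?thesis by (rule cip_cong_ev)
qed

lemma Y2T_cip: "cip Y2T (\<beta>2^2 + 2 * \<beta>2 * \<beta>1 * cx + \<beta>1^2 * cx2 + \<sigma>e^2)"
proof -
  have s: "(\<lambda>n. \<Sum>i<n. (2 * mu n i / real n)^2) \<longlonglongrightarrow> 0"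
  proof -
    have "\<forall>\<^sub>F n in sequentially. (\<Sum>i<n. (2 * mu n i / real n)^2) =
        4 * (\<beta>2^2 + 2 * \<beta>2 * \<beta>1 * xb n + \<beta>1^2 * x2b n) * (1 / real n)"
      using ev_gt2
    proof eventually_elim
      case (elim n)
      have "(\<Sum>i<n. (2 * mu n i / real n)^2) = 4 * ((\<Sum>i<n. (mu n i)^2) / real n) * (1 / real n)"
        by (simp add: power_divide sum_divide_distrib[symmetric] sum_distrib_left[symmetric] power_mult_distrib
             power2_eq_square)
      then show ?case using sum_mu2[of n] elim by simp
    qed
    moreover have "(\<lambda>n. 4 * (\<beta>2^2 + 2 * \<beta>2 * \<beta>1 * xb n + \<beta>1^2 * x2b n) * (1 / real n)) \<longlonglongrightarrow>
        4 * (\<beta>2^2 + 2 * \<beta>2 * \<beta>1 * cx + \<beta>1^2 * cx2) * 0"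
      by (intro tendsto_intros xb_lim x2b_lim inv_n_lim)
    ultimately show ?thesis by (subst tendsto_cong) auto
  qed
  have "cip (\<lambda>n \<omega>. (\<beta>2^2 + 2 * \<beta>2 * \<beta>1 * xb n + \<beta>1^2 * x2b n + \<sigma>e^2)
   + (\<Sum>i<n. (2 * mu n i / real n) * (Y n i \<omega> - mu n i))
   + (\<Sum>i<n. ((Y n i \<omega> - mu n i)^2 - \<sigma>e^2) / real n)
   + c2 n * Z n 4 \<omega> + DY2 n \<omega>) ((\<beta>2^2 + 2 * \<beta>2 * \<beta>1 * cx + \<beta>1^2 * cx2 + \<sigma>e^2) + 0 + 0 + 0 + 0)"
    by (intro cip_add cip_const tendsto_intros xb_lim x2b_lim lin_cip s quad_cip noise_cip c_lim_aux(1) nc_lim DY2_cip) auto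
  then have "cip (\<lambda>n \<omega>. (\<beta>2^2 + 2 * \<beta>2 * \<beta>1 * xb n + \<beta>1^2 * x2b n + \<sigma>e^2)
   + (\<Sum>i<n. (2 * mu n i / real n) * (Y n i \<omega> - mu n i))
   + (\<Sum>i<n. ((Y n i \<omega> - mu n i)^2 - \<sigma>e^2) / real n)
   + c2 n * Z n 4 \<omega> + DY2 n \<omega>) (\<beta>2^2 + 2 * \<beta>2 * \<beta>1 * cx + \<beta>1^2 * cx2 + \<sigma>e^2)" by simp
  moreover have "\<forall>\<^sub>F n in sequentially. \<forall>\<omega>\<in>space (M n). (\<beta>2^2 + 2 * \<beta>2 * \<beta>1 * xb n + \<beta>1^2 * x2b n + \<sigma>e^2)
   + (\<Sum>i<n. (2 * mu n i / real n) * (Y n i \<omega> - mu n i))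
   + (\<Sum>i<n. ((Y n i \<omega> - mu n i)^2 - \<sigma>e^2) / real n)
   + c2 n * Z n 4 \<omega> + DY2 n \<omega> = Y2T n \<omega>"
    using ev_gt2 by eventually_elim (simp add: Y2T_eq)
  ultimately show ?thesis by (rule cip_cong_ev)
qed

end

context sett
begin

definition "B1T n \<omega> = beta1_t (\<Delta> n) (\<rho> n) n (x n) (\<lambda>i. Y n i \<omega>) (\<lambda>k. Z n k \<omega>)"
definition "B2T n \<omega> = beta2_t (\<Delta> n) (\<rho> n) n (x n) (\<lambda>i. Y n i \<omega>) (\<lambda>k. Z n k \<omega>)"
definition "RES n \<omega> = resid_t (\<Delta> n) (\<rho> n) n (x n) (\<lambda>i. Y n i \<omega>) (\<lambda>k. Z n k \<omega>)"

lemma B1T_eq: "B1T n \<omega> = (XYT n \<omega> - XT n \<omega> * YT n \<omega>) / (X2T n \<omega> - XT n \<omega> * XT n \<omega>)"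
  by (simp add: B1T_def beta1_t_def XYT_def XT_def YT_def X2T_def power2_eq_square)

lemma B2T_eq: "B2T n \<omega> = (YT n \<omega> * X2T n \<omega> - XT n \<omega> * XYT n \<omega>) / (X2T n \<omega> - XT n \<omega> * XT n \<omega>)"
  by (simp add: B2T_def beta2_t_def XYT_def XT_def YT_def X2T_def power2_eq_square)

lemma RES_eq: "RES n \<omega> = B2T n \<omega> * B2T n \<omega> * 1 + 2 * B2T n \<omega> * B1T n \<omega> * XT n \<omega> + B1T n \<omega> * B1T n \<omega> * X2T n \<omega>
   - 2 * (B2T n \<omega> * YT n \<omega> + B1T n \<omega> * XYT n \<omega>) + Y2T n \<omega>"
  by (simp add: RES_def resid_t_def qform2_def B1T_def B2T_def XYT_def XT_def YT_def X2T_def Y2T_def)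

lemma s_pos: "cx2 - cx * cx > 0" using c_ineq by (simp add: power2_eq_square)

lemma B1T_cip: "cip B1T \<beta>1"
proof -
  have "cip (\<lambda>n \<omega>. (XYT n \<omega> - XT n \<omega> * YT n \<omega>) / (X2T n \<omega> - XT n \<omega> * XT n \<omega>))
     ((\<beta>2 * cx + \<beta>1 * cx2 - cx * (\<beta>2 + \<beta>1 * cx)) / (cx2 - cx * cx))"
    by (intro cip_divide cip_diff cip_mult XYT_cip XT_cip YT_cip X2T_cip) (use s_pos in simp)
  moreover have "(\<beta>2 * cx + \<beta>1 * cx2 - cx * (\<beta>2 + \<beta>1 * cx)) / (cx2 - cx * cx) = \<beta>1"
    using s_pos by (simp add: field_simps)
  ultimately show ?thesis by (simp add: B1T_eq[abs_def])
qed

lemma B2T_cip: "cip B2T \<beta>2"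
proof -
  have "cip (\<lambda>n \<omega>. (YT n \<omega> * X2T n \<omega> - XT n \<omega> * XYT n \<omega>) / (X2T n \<omega> - XT n \<omega> * XT n \<omega>))
     (((\<beta>2 + \<beta>1 * cx) * cx2 - cx * (\<beta>2 * cx + \<beta>1 * cx2)) / (cx2 - cx * cx))"
    by (intro cip_divide cip_diff cip_mult XYT_cip XT_cip YT_cip X2T_cip) (use s_pos in simp)
  moreover have "((\<beta>2 + \<beta>1 * cx) * cx2 - cx * (\<beta>2 * cx + \<beta>1 * cx2)) / (cx2 - cx * cx) = \<beta>2"
    using s_pos by (simp add: field_simps)
  ultimately show ?thesis by (simp add: B2T_eq[abs_def])
qed

lemma RES_cip: "cip RES (\<sigma>e^2)"
proof -
  have k2: "cip (\<lambda>n \<omega>. 2) 2" by (rule cip_const[OF tendsto_const])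
  have k1: "cip (\<lambda>n \<omega>. 1) 1" by (rule cip_const[OF tendsto_const])
  have q1: "cip (\<lambda>n \<omega>. B2T n \<omega> * B2T n \<omega> * 1) (\<beta>2 * \<beta>2 * 1)"
    by (rule cip_mult[OF cip_mult[OF B2T_cip B2T_cip] k1])
  have q2: "cip (\<lambda>n \<omega>. 2 * B2T n \<omega> * B1T n \<omega> * XT n \<omega>) (2 * \<beta>2 * \<beta>1 * cx)"
    by (rule cip_mult[OF cip_mult[OF cip_mult[OF k2 B2T_cip] B1T_cip] XT_cip])
  have q3: "cip (\<lambda>n \<omega>. B1T n \<omega> * B1T n \<omega> * X2T n \<omega>) (\<beta>1 * \<beta>1 * cx2)"
    by (rule cip_mult[OF cip_mult[OF B1T_cip B1T_cip] X2T_cip])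
  have q4: "cip (\<lambda>n \<omega>. 2 * (B2T n \<omega> * YT n \<omega> + B1T n \<omega> * XYT n \<omega>))
      (2 * (\<beta>2 * (\<beta>2 + \<beta>1 * cx) + \<beta>1 * (\<beta>2 * cx + \<beta>1 * cx2)))"
    by (rule cip_mult[OF k2 cip_add[OF cip_mult[OF B2T_cip YT_cip] cip_mult[OF B1T_cip XYT_cip]]])
  have c1: "cip (\<lambda>n \<omega>. B2T n \<omega> * B2T n \<omega> * 1 + 2 * B2T n \<omega> * B1T n \<omega> * XT n \<omega> + B1T n \<omega> * B1T n \<omega> * X2T n \<omega>
   - 2 * (B2T n \<omega> * YT n \<omega> + B1T n \<omega> * XYT n \<omega>) + Y2T n \<omega>)
    (\<beta>2 * \<beta>2 * 1 + 2 * \<beta>2 * \<beta>1 * cx + \<beta>1 * \<beta>1 * cx2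
   - 2 * (\<beta>2 * (\<beta>2 + \<beta>1 * cx) + \<beta>1 * (\<beta>2 * cx + \<beta>1 * cx2)) + (\<beta>2^2 + 2 * \<beta>2 * \<beta>1 * cx + \<beta>1^2 * cx2 + \<sigma>e^2))"
    by (rule cip_add[OF cip_diff[OF cip_add[OF cip_add[OF q1 q2] q3] q4] Y2T_cip])
  have L: "(\<beta>2 * \<beta>2 * 1 + 2 * \<beta>2 * \<beta>1 * cx + \<beta>1 * \<beta>1 * cx2
   - 2 * (\<beta>2 * (\<beta>2 + \<beta>1 * cx) + \<beta>1 * (\<beta>2 * cx + \<beta>1 * cx2)) + (\<beta>2^2 + 2 * \<beta>2 * \<beta>1 * cx + \<beta>1^2 * cx2 + \<sigma>e^2))
    = \<sigma>e^2" by (simp add: power2_eq_square algebra_simps)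
  have F: "(\<lambda>n \<omega>. B2T n \<omega> * B2T n \<omega> * 1 + 2 * B2T n \<omega> * B1T n \<omega> * XT n \<omega> + B1T n \<omega> * B1T n \<omega> * X2T n \<omega>
   - 2 * (B2T n \<omega> * YT n \<omega> + B1T n \<omega> * XYT n \<omega>) + Y2T n \<omega>) = RES"
    by (intro ext) (simp only: RES_eq)
  from c1 show ?thesis unfolding L F .
qed

lemma part1:
  "\<forall>\<epsilon>>0. (\<lambda>n. measure (M n) {\<omega> \<in> space (M n).
             \<bar>real n * resid_t (\<Delta> n) (\<rho> n) n (x n) (\<lambda>i. Y n i \<omega>) (\<lambda>k. Z n k \<omega>) / (real n - 2)
              - \<sigma>e^2\<bar> > \<epsilon>}) \<longlonglongrightarrow> 0"
proof -
  have l: "(\<lambda>n. real n / (real n - 2)) \<longlonglongrightarrow> 1" by real_asymp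
  have c: "cip (\<lambda>n \<omega>. (real n / (real n - 2)) * RES n \<omega>) (1 * \<sigma>e^2)"
    by (rule cip_mult[OF cip_const[OF l] RES_cip])
  have F: "(\<lambda>n \<omega>. (real n / (real n - 2)) * RES n \<omega>) =
      (\<lambda>n \<omega>. real n * resid_t (\<Delta> n) (\<rho> n) n (x n) (\<lambda>i. Y n i \<omega>) (\<lambda>k. Z n k \<omega>) / (real n - 2))"
    by (intro ext) (simp add: RES_def)
  from c have "cip (\<lambda>n \<omega>. real n * resid_t (\<Delta> n) (\<rho> n) n (x n) (\<lambda>i. Y n i \<omega>) (\<lambda>k. Z n k \<omega>) / (real n - 2)) (\<sigma>e^2)"
    unfolding F by simp
  then show ?thesis unfolding cip_def by blast
qed

end

lemma sq_lim_sign: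
  fixes a :: "nat \<Rightarrow> real"
  assumes sq: "(\<lambda>n. (a n)^2) \<longlonglongrightarrow> \<eta>^2" and sg: "\<And>n. a n * \<eta> \<ge> 0"
  shows "a \<longlonglongrightarrow> \<eta>"
proof -
  have abs_lim: "(\<lambda>n. \<bar>a n\<bar>) \<longlonglongrightarrow> \<bar>\<eta>\<bar>"
  proof -
    have "(\<lambda>n. sqrt ((a n)^2)) \<longlonglongrightarrow> sqrt (\<eta>^2)" by (intro tendsto_intros sq)
    then show ?thesis by simp
  qed
  consider "\<eta> = 0" | "\<eta> > 0" | "\<eta> < 0" by linarith
  then show ?thesis
  proof cases
    case 1 then show ?thesis using abs_lim tendsto_rabs_zero_iff by fastforce
  next
    case 2
    then have "a n = \<bar>a n\<bar>" for n using sg[of n] by (simp add: zero_le_mult_iff)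
    then show ?thesis using abs_lim 2 by (metis abs_of_pos ext)
  next
    case 3
    then have "a n = - \<bar>a n\<bar>" for n using sg[of n] by (auto simp: mult_nonneg_nonpos2 zero_le_mult_iff)
    then have "a = (\<lambda>n. - \<bar>a n\<bar>)" by (rule ext)
    moreover have "(\<lambda>n. - \<bar>a n\<bar>) \<longlonglongrightarrow> - \<bar>\<eta>\<bar>" by (intro tendsto_intros abs_lim)
    ultimately show ?thesis using 3 by simp
  qed
qed

lemma ftest_alg:
  fixes a b c d :: real
  assumes "c - a * a \<noteq> 0"
  shows "qform2 1 a c ((b * c - a * d) / (c - a^2) - b) ((d - a * b) / (c - a^2) - 0) = (d - a * b)^2 / (c - a * a)"
proof -
  have h: "c - a^2 \<noteq> 0" using assms by (simp add: power2_eq_square)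
  define v where "v = (d - a * b) / (c - a^2)"
  have hu: "(b * c - a * d) / (c - a^2) - b = - a * v"
    using h by (simp add: v_def field_simps power2_eq_square)
  have "qform2 1 a c (- a * v) (v - 0) = v * v * (c - a * a)"
    by (simp add: qform2_def algebra_simps)
  also have "\<dots> = (d - a * b)^2 / (c - a * a)"
  proof -
    have gen: "\<And>D s :: real. s \<noteq> 0 \<Longrightarrow> D / s * (D / s) * s = D^2 / s"
      by (simp add: field_simps power2_eq_square)
    have vs: "v = (d - a * b) / (c - a * a)" by (simp add: v_def power2_eq_square)
    show ?thesis unfolding vs by (rule gen[OF assms])
  qed
  finally show ?thesis using hu by (simp add: v_def)
qed

context sett
begin

definition "Sx n = (\<Sum>i<n. (x n i - xb n)^2)"
definition "sn n = Sx n / real n"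
definition "eps = (if 0 \<le> \<beta>1 * \<eta> then 1 else -1 :: real)"
definition "UU n \<omega> = eps * (\<Sum>i<n. (x n i - xb n) * Y n i \<omega>) / (\<sigma>e * sqrt (Sx n))"
definition "mp n = eps * \<beta>1 * sqrt (Sx n) / \<sigma>e"
definition "VV n \<omega> = UU n \<omega> - mp n"
definition "TT n \<omega> = \<sigma>e^2 * (UU n \<omega>)^2"
definition "AA n \<omega> = (\<Sum>i<n. (x n i - xb n) * Y n i \<omega>) / sqrt (real n)"
definition "QQ n \<omega> = sqrt (real n) * (XYT n \<omega> - XT n \<omega> * YT n \<omega>)"
definition "ST n \<omega> = X2T n \<omega> - XT n \<omega> * XT n \<omega>"
definition "SS n \<omega> = real n * ftest_t (\<Delta> n) (\<rho> n) n (x n) (\<lambda>i. Y n i \<omega>) (\<lambda>k. Z n k \<omega>)"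
definition "DD n \<omega> = QQ n \<omega> - AA n \<omega>"

lemma eps_sq: "eps * eps = 1" by (simp add: eps_def)

lemma sum_dev: "n > 0 \<Longrightarrow> (\<Sum>i<n. x n i - xb n) = 0"
  by (simp add: sum_subtractf xb_def)

lemma Sx_eq: "n > 0 \<Longrightarrow> Sx n = real n * (x2b n - (xb n)^2)"
proof -
  assume n: "n > 0"
  have "Sx n = (\<Sum>i<n. (x n i)^2) - 2 * xb n * (\<Sum>i<n. x n i) + real n * (xb n)^2"
    by (simp add: Sx_def power2_diff sum_subtractf sum.distrib sum_distrib_left sum_distrib_right mult_ac)
  also have "(\<Sum>i<n. x n i) = real n * xb n" using n by (simp add: xb_def)
  also have "(\<Sum>i<n. (x n i)^2) = real n * x2b n" using n by (simp add: x2b_def)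
  finally show ?thesis by (simp add: power2_eq_square algebra_simps)
qed

lemma sn_lim: "sn \<longlonglongrightarrow> cx2 - cx * cx"
proof -
  have "\<forall>\<^sub>F n in sequentially. sn n = x2b n - xb n * xb n"
    using ev_gt2 by eventually_elim (simp add: sn_def Sx_eq power2_eq_square)
  moreover have "(\<lambda>n. x2b n - xb n * xb n) \<longlonglongrightarrow> cx2 - cx * cx" by (intro tendsto_intros x2b_lim xb_lim)
  ultimately show ?thesis by (subst tendsto_cong) auto
qed

lemma sn_pos_ev: "\<forall>\<^sub>F n in sequentially. sn n > 0"
  using order_tendstoD(1)[OF sn_lim s_pos] .

lemma Sx_pos_ev: "\<forall>\<^sub>F n in sequentially. Sx n > 0 \<and> n > 2"
  using sn_pos_ev ev_gt2 by eventually_elim (auto simp: sn_def zero_less_divide_iff)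

lemma Sx_nonneg: "Sx n \<ge> 0" by (simp add: Sx_def sum_nonneg)

lemma mp_sq: "(mp n)^2 = (\<Sum>i<n. ((\<beta>2 + \<beta>1 * x n i)
                       - ((\<beta>2 + \<beta>1 * ((\<Sum>j<n. x n j) / real n)) + 0 * x n i))^2) / \<sigma>e^2"
proof -
  have "(\<Sum>i<n. ((\<beta>2 + \<beta>1 * x n i) - ((\<beta>2 + \<beta>1 * ((\<Sum>j<n. x n j) / real n)) + 0 * x n i))^2)
     = (\<Sum>i<n. \<beta>1^2 * (x n i - xb n)^2)"
    by (intro sum.cong) (auto simp: xb_def power2_eq_square algebra_simps)
  also have "\<dots> = \<beta>1^2 * Sx n" by (simp add: Sx_def sum_distrib_left)
  moreover have "eps^2 = 1" by (simp add: eps_def)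
  then have "(mp n)^2 = \<beta>1^2 * Sx n / \<sigma>e^2"
    by (simp add: mp_def power_divide power_mult_distrib real_sqrt_pow2[OF Sx_nonneg])
  ultimately show ?thesis by simp
qed

lemma mp_lim: "mp \<longlonglongrightarrow> \<eta>"
proof (rule sq_lim_sign)
  show "(\<lambda>n. (mp n)^2) \<longlonglongrightarrow> \<eta>^2" using eta_lim by (simp add: mp_sq)
  fix n
  have "mp n * \<eta> = (eps * (\<beta>1 * \<eta>)) * (sqrt (Sx n) / \<sigma>e)" by (simp add: mp_def)
  moreover have "eps * (\<beta>1 * \<eta>) \<ge> 0" by (simp add: eps_def)
  moreover have "sqrt (Sx n) / \<sigma>e \<ge> 0" using sigma_pos Sx_nonneg[of n] by (intro divide_nonneg_pos) auto
  ultimately show "mp n * \<eta> \<ge> 0" by (metis mult_nonneg_nonneg)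
qed


lemma VV_normal:
  assumes n: "n > 2" and S: "Sx n > 0"
  shows "distributed (M n) lborel (VV n) std_normal_density"
proof -
  interpret P: prob_space "M n" using prob n by auto
  define I where "I = {i \<in> {..<n}. x n i \<noteq> xb n}"
  define c where "c i = eps * (x n i - xb n) / (\<sigma>e * sqrt (Sx n))" for i
  have fI: "finite I" by (simp add: I_def)
  have I0: "I \<noteq> {}"
  proof
    assume "I = {}"
    then have "\<forall>i<n. x n i = xb n" by (auto simp: I_def)
    then have "Sx n = 0" by (simp add: Sx_def)
    then show False using S by simp
  qed
  have eps0: "eps \<noteq> 0" by (simp add: eps_def)
  have c0: "c i \<noteq> 0" if "i \<in> I" for i using that eps0 sigma_pos S by (auto simp: c_def I_def)
  have zero_out: "f i * (x n i - xb n) = 0" if "i \<in> {..<n} - I" for f i using that by (auto simp: I_def)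
  have UU_eq: "UU n \<omega> = (\<Sum>i\<in>I. c i * Y n i \<omega>)" for \<omega>
  proof -
    have "UU n \<omega> = (\<Sum>i<n. c i * Y n i \<omega>)"
      by (simp add: UU_def c_def sum_divide_distrib sum_distrib_left mult_ac)
    also have "\<dots> = (\<Sum>i\<in>I. c i * Y n i \<omega>)"
      by (rule sum.mono_neutral_right) (auto simp: I_def c_def)
    finally show ?thesis .
  qed
  have ind: "P.indep_vars (\<lambda>_. borel) (\<lambda>i \<omega>. c i * Y n i \<omega>) I"
    by (rule P.indep_vars_compose2[OF P.indep_vars_subset[OF indepY[OF n]]]) (auto simp: I_def)
  have dist_i: "distributed (M n) lborel (\<lambda>\<omega>. c i * Y n i \<omega>) (normal_density (c i * mu n i) (\<bar>c i\<bar> * \<sigma>e))"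
    if "i \<in> I" for i
  proof -
    have iI: "i < n" using that by (auto simp: I_def)
    show ?thesis
      using P.normal_density_affine[OF Y_normal[OF n iI] sigma_pos c0[OF that], where \<beta>=0] by simp
  qed
  have sd: "sqrt (\<Sum>i\<in>I. (\<bar>c i\<bar> * \<sigma>e)^2) = 1"
  proof -
    have "(\<Sum>i\<in>I. (\<bar>c i\<bar> * \<sigma>e)^2) = (\<Sum>i<n. (\<bar>c i\<bar> * \<sigma>e)^2)"
      by (rule sum.mono_neutral_left) (auto simp: I_def c_def)
    also have "\<dots> = (\<Sum>i<n. (x n i - xb n)^2) * (eps^2 / (Sx n))"
    proof -
      have "(\<bar>c i\<bar> * \<sigma>e)^2 = (x n i - xb n)^2 * (eps^2 / (Sx n))" for i
        using sigma_pos S by (simp add: c_def power_mult_distrib power_divide real_sqrt_pow2[OF Sx_nonneg])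
      then show ?thesis by (simp add: sum_distrib_right sum_divide_distrib)
    qed
    also have "eps^2 = 1" by (simp add: eps_def)
    finally show ?thesis using S by (simp add: Sx_def)
  qed
  have mean: "(\<Sum>i\<in>I. c i * mu n i) = mp n"
  proof -
    have "(\<Sum>i\<in>I. c i * mu n i) = (\<Sum>i<n. c i * mu n i)"
      by (rule sum.mono_neutral_left) (auto simp: I_def c_def)
    also have "\<dots> = eps / (\<sigma>e * sqrt (Sx n)) * (\<Sum>i<n. (x n i - xb n) * mu n i)"
      by (simp add: c_def sum_distrib_left mult_ac)
    also have "(\<Sum>i<n. (x n i - xb n) * mu n i) = \<beta>2 * (\<Sum>i<n. x n i - xb n) + \<beta>1 * Sx n + \<beta>1 * xb n * (\<Sum>i<n. x n i - xb n)"
    proof -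
      have "(\<Sum>i<n. (x n i - xb n) * mu n i) = (\<Sum>i<n. \<beta>2 * (x n i - xb n) + \<beta>1 * (x n i - xb n)^2 + \<beta>1 * xb n * (x n i - xb n))"
        by (intro sum.cong) (auto simp: mu_def power2_eq_square algebra_simps)
      then show ?thesis by (simp add: sum.distrib sum_distrib_left Sx_def)
    qed
    also have "\<dots> = \<beta>1 * Sx n" using n sum_dev[of n] by simp
    finally have h: "(\<Sum>i\<in>I. c i * mu n i) = eps / (\<sigma>e * sqrt (Sx n)) * (\<beta>1 * Sx n)" .
    have ss: "Sx n = sqrt (Sx n) * sqrt (Sx n)" using Sx_nonneg[of n] by simp
    have "eps / (\<sigma>e * sqrt (Sx n)) * (\<beta>1 * (sqrt (Sx n) * sqrt (Sx n))) = mp n"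
      using S sigma_pos by (simp add: mp_def field_simps)
    then show ?thesis using h ss by metis
  qed
  have "distributed (M n) lborel (\<lambda>\<omega>. \<Sum>i\<in>I. c i * Y n i \<omega>)
      (normal_density (\<Sum>i\<in>I. c i * mu n i) (sqrt (\<Sum>i\<in>I. (\<bar>c i\<bar> * \<sigma>e)^2)))"
    by (rule P.sum_indep_normal[OF fI I0 ind]) (use c0 sigma_pos dist_i in auto)
  then have DU: "distributed (M n) lborel (UU n) (normal_density (mp n) 1)"
    unfolding sd mean UU_eq[symmetric] by (simp add: fun_eq_iff)
  have "distributed (M n) lborel (\<lambda>\<omega>. - mp n + 1 * UU n \<omega>) (normal_density (- mp n + 1 * mp n) (\<bar>1\<bar> * 1))"
    by (rule P.normal_density_affine[OF DU]) auto
  then show ?thesis by (simp add: VV_def[abs_def])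
qed


lemma DY_meas: "n > 2 \<Longrightarrow> DY n \<in> borel_measurable (M n)"
  unfolding DY_def[abs_def] using Y_meas by (auto intro!: borel_measurable_sum)

lemma DXY_meas: "n > 2 \<Longrightarrow> DXY n \<in> borel_measurable (M n)"
  unfolding DXY_def[abs_def] using Y_meas by (auto intro!: borel_measurable_sum)

lemma DY_zero: "n > 2 \<Longrightarrow> \<not> Bad n \<omega> \<Longrightarrow> DY n \<omega> = 0"
proof -
  assume n: "n > 2" and g: "\<not> Bad n \<omega>"
  have "clip (-\<Delta> n) (\<Delta> n) (Y n i \<omega>) = Y n i \<omega>" if "i < n" for i
    using good_Y[OF g that] by (intro clip_id) auto
  then show "DY n \<omega> = 0" unfolding DY_def by simp
qed

lemma DXY_zero: "n > 2 \<Longrightarrow> \<not> Bad n \<omega> \<Longrightarrow> DXY n \<omega> = 0"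
proof -
  assume n: "n > 2" and g: "\<not> Bad n \<omega>"
  have bnd: "\<bar>x n i * Y n i \<omega>\<bar> \<le> (\<Delta> n)^2" if "i < n" for i
  proof -
    have "\<bar>x n i\<bar> \<le> \<Delta> n" using x_in[OF n that] by auto
    then have "\<bar>x n i\<bar> * \<bar>Y n i \<omega>\<bar> \<le> \<Delta> n * \<Delta> n"
      using good_Y[OF g that] by (intro mult_mono) auto
    then show ?thesis by (simp add: abs_mult power2_eq_square)
  qed
  have "clip (-((\<Delta> n)^2)) ((\<Delta> n)^2) (x n i * Y n i \<omega>) = x n i * Y n i \<omega>" if "i < n" for i
    using bnd[OF that] by (intro clip_id) (auto simp: abs_le_iff)
  then show "DXY n \<omega> = 0" unfolding DXY_def by simp
qed

lemma sDY_cip: "cip (\<lambda>n \<omega>. sqrt (real n) * DY n \<omega>) 0"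
  by (rule dev_cip) (use DY_meas DY_zero in auto)

lemma sDXY_cip: "cip (\<lambda>n \<omega>. sqrt (real n) * DXY n \<omega>) 0"
  by (rule dev_cip) (use DXY_meas DXY_zero in auto)

definition "xyU n \<omega> = (\<Sum>i<n. x n i * Y n i \<omega>) / real n"
definition "yU n \<omega> = (\<Sum>i<n. Y n i \<omega>) / real n"

lemma XYT_eq2: "XYT n \<omega> = xyU n \<omega> + c3 n * Z n 3 \<omega> + DXY n \<omega>"
  by (simp add: XYT_def xybar_t_def xyU_def DXY_def c3_def sum_subtractf diff_divide_distrib)

lemma YT_eq2: "YT n \<omega> = yU n \<omega> + c0 n * Z n 1 \<omega> + DY n \<omega>"
  by (simp add: YT_def ybar_t_def yU_def DY_def c0_def sum_subtractf diff_divide_distrib)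

lemma AA_eq: "n > 0 \<Longrightarrow> AA n \<omega> = sqrt (real n) * (xyU n \<omega> - xb n * yU n \<omega>)"
proof -
  assume n: "n > 0"
  have "(\<Sum>i<n. (x n i - xb n) * Y n i \<omega>) = real n * (xyU n \<omega> - xb n * yU n \<omega>)"
    using n by (simp add: xyU_def yU_def left_diff_distrib sum_subtractf sum_distrib_left field_simps)
  moreover have "real n / sqrt (real n) = sqrt (real n)" using n by (simp add: real_div_sqrt)
  ultimately show ?thesis by (simp add: AA_def) (metis times_divide_eq_left mult.commute)
qed

lemma DD_eq: "n > 2 \<Longrightarrow> DD n \<omega> = (sqrt (real n) * c3 n) * Z n 3 \<omega> + sqrt (real n) * DXY n \<omega>
   - ((sqrt (real n) * c0 n) * Z n 0 \<omega>) * YT n \<omega> - xb n * ((sqrt (real n) * c0 n) * Z n 1 \<omega>)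
   - xb n * (sqrt (real n) * DY n \<omega>)"
proof -
  assume n: "n > 2"
  have "DD n \<omega> = sqrt (real n) * (XYT n \<omega> - XT n \<omega> * YT n \<omega>) - sqrt (real n) * (xyU n \<omega> - xb n * yU n \<omega>)"
    using n by (simp add: DD_def QQ_def AA_eq)
  also have "\<dots> = sqrt (real n) * ((xyU n \<omega> + c3 n * Z n 3 \<omega> + DXY n \<omega>) - (xb n + c0 n * Z n 0 \<omega>) * YT n \<omega>)
      - sqrt (real n) * (xyU n \<omega> - xb n * (YT n \<omega> - c0 n * Z n 1 \<omega> - DY n \<omega>))"
    using n by (simp add: XYT_eq2 XT_eq YT_eq2)
  also have "\<dots> = (sqrt (real n) * c3 n) * Z n 3 \<omega> + sqrt (real n) * DXY n \<omega>
   - ((sqrt (real n) * c0 n) * Z n 0 \<omega>) * YT n \<omega> - xb n * ((sqrt (real n) * c0 n) * Z n 1 \<omega>)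
   - xb n * (sqrt (real n) * DY n \<omega>)" by (simp add: algebra_simps)
  finally show ?thesis .
qed

lemma DD_cip: "cip DD 0"
proof -
  have n3: "cip (\<lambda>n \<omega>. (sqrt (real n) * c3 n) * Z n 3 \<omega>) 0"
    by (rule noise_cip[OF _ c_lim_aux(2)[OF nc_lim(3)]]) simp
  have n0: "cip (\<lambda>n \<omega>. (sqrt (real n) * c0 n) * Z n 0 \<omega>) 0"
    by (rule noise_cip[OF _ c_lim_aux(2)[OF nc_lim(1)]]) simp
  have n1: "cip (\<lambda>n \<omega>. (sqrt (real n) * c0 n) * Z n 1 \<omega>) 0"
    by (rule noise_cip[OF _ c_lim_aux(2)[OF nc_lim(1)]]) simp
  have "cip (\<lambda>n \<omega>. (sqrt (real n) * c3 n) * Z n 3 \<omega> + sqrt (real n) * DXY n \<omega>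
   - ((sqrt (real n) * c0 n) * Z n 0 \<omega>) * YT n \<omega> - xb n * ((sqrt (real n) * c0 n) * Z n 1 \<omega>)
   - xb n * (sqrt (real n) * DY n \<omega>)) (0 + 0 - 0 * (\<beta>2 + \<beta>1 * cx) - cx * 0 - cx * 0)"
    by (rule cip_diff[OF cip_diff[OF cip_diff[OF cip_add[OF n3 sDXY_cip] cip_mult[OF n0 YT_cip]]
          cip_mult[OF cip_const[OF xb_lim] n1]] cip_mult[OF cip_const[OF xb_lim] sDY_cip]])
  then have "cip (\<lambda>n \<omega>. (sqrt (real n) * c3 n) * Z n 3 \<omega> + sqrt (real n) * DXY n \<omega>
   - ((sqrt (real n) * c0 n) * Z n 0 \<omega>) * YT n \<omega> - xb n * ((sqrt (real n) * c0 n) * Z n 1 \<omega>)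
   - xb n * (sqrt (real n) * DY n \<omega>)) 0" by simp
  moreover have "\<forall>\<^sub>F n in sequentially. \<forall>\<omega>\<in>space (M n). (sqrt (real n) * c3 n) * Z n 3 \<omega> + sqrt (real n) * DXY n \<omega>
   - ((sqrt (real n) * c0 n) * Z n 0 \<omega>) * YT n \<omega> - xb n * ((sqrt (real n) * c0 n) * Z n 1 \<omega>)
   - xb n * (sqrt (real n) * DY n \<omega>) = DD n \<omega>"
    using ev_gt2 by eventually_elim (simp add: DD_eq)
  ultimately show ?thesis by (rule cip_cong_ev)
qed


lemma VV_meas: "n > 2 \<Longrightarrow> Sx n > 0 \<Longrightarrow> VV n \<in> borel_measurable (M n)"
proof -
  assume a: "n > 2" and b: "Sx n > 0"
  show ?thesis using VV_normal[OF a b] by (auto dest: distributed_measurable)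
qed

lemma VV_bip: "bip VV"
proof (rule bip_L2)
  have mom: "integrable (M n) (\<lambda>\<omega>. (VV n \<omega>)^2) \<and> (\<integral>\<omega>. (VV n \<omega>)^2 \<partial>M n) = 1"
    if "n > 2" "Sx n > 0" for n
  proof -
    have P: "prob_space (M n)" using prob that by auto
    have D: "distributed (M n) lborel (VV n) (normal_density 0 1)" using VV_normal that by auto
    show ?thesis
      using prob_space.normal_centered_moment(1)[OF P D, of 2] prob_space.normal_moments(2)[OF P D] by simp
  qed
  show "\<forall>\<^sub>F n in sequentially. VV n \<in> borel_measurable (M n)"
    using Sx_pos_ev by eventually_elim (use VV_meas in auto)
  show "\<forall>\<^sub>F n in sequentially. integrable (M n) (\<lambda>\<omega>. (VV n \<omega>)^2)"
    using Sx_pos_ev by eventually_elim (use mom in auto)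
  show "\<forall>\<^sub>F n in sequentially. (\<integral>\<omega>. (VV n \<omega>)^2 \<partial>M n) \<le> 1"
    using Sx_pos_ev by eventually_elim (use mom in auto)
qed

lemma AA_eq2: "n > 0 \<Longrightarrow> Sx n > 0 \<Longrightarrow> AA n \<omega> = (eps * \<sigma>e * sqrt (sn n)) * (VV n \<omega> + mp n)"
proof -
  assume n: "n > 0" and S: "Sx n > 0"
  have "VV n \<omega> + mp n = UU n \<omega>" by (simp add: VV_def)
  moreover have "(eps * \<sigma>e * sqrt (sn n)) * UU n \<omega> = AA n \<omega>"
    using n S sigma_pos eps_sq
    by (simp add: UU_def AA_def sn_def real_sqrt_divide field_simps)
  ultimately show ?thesis by simp
qed

lemma AA_bip: "bip AA"
proof -
  have l: "(\<lambda>n. eps * \<sigma>e * sqrt (sn n)) \<longlonglongrightarrow> eps * \<sigma>e * sqrt (cx2 - cx * cx)"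
    by (intro tendsto_intros sn_lim)
  have "bip (\<lambda>n \<omega>. (eps * \<sigma>e * sqrt (sn n)) * (VV n \<omega> + mp n))"
    by (rule bip_mult[OF cip_imp_bip[OF cip_const[OF l]] bip_add[OF VV_bip cip_imp_bip[OF cip_const[OF mp_lim]]]])
  moreover have "\<forall>\<^sub>F n in sequentially. \<forall>\<omega>\<in>space (M n). (eps * \<sigma>e * sqrt (sn n)) * (VV n \<omega> + mp n) = AA n \<omega>"
    using Sx_pos_ev by eventually_elim (simp add: AA_eq2)
  ultimately show ?thesis by (rule bip_cong_ev)
qed

lemma ST_cip: "cip ST (cx2 - cx * cx)"
  using cip_diff[OF X2T_cip cip_mult[OF XT_cip XT_cip]] by (simp add: ST_def[abs_def])

lemma SS_eq: "ST n \<omega> \<noteq> 0 \<Longrightarrow> SS n \<omega> = (QQ n \<omega>)^2 / ST n \<omega>"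
proof -
  assume h: "ST n \<omega> \<noteq> 0"
  have "ftest_t (\<Delta> n) (\<rho> n) n (x n) (\<lambda>i. Y n i \<omega>) (\<lambda>k. Z n k \<omega>) = (XYT n \<omega> - XT n \<omega> * YT n \<omega>)^2 / ST n \<omega>"
    using ftest_alg[of "X2T n \<omega>" "XT n \<omega>" "YT n \<omega>" "XYT n \<omega>"] h
    unfolding ftest_t_def beta1_t_def beta2_t_def XT_def YT_def X2T_def XYT_def ST_def by simp
  then show ?thesis by (simp add: SS_def QQ_def power_mult_distrib)
qed

lemma TT_eq: "n > 0 \<Longrightarrow> Sx n > 0 \<Longrightarrow> TT n \<omega> = (AA n \<omega>)^2 / sn n"
proof -
  assume n: "n > 0" and S: "Sx n > 0"
  have sn: "sn n > 0" using n S by (simp add: sn_def)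
  have "AA n \<omega> = (eps * \<sigma>e * sqrt (sn n)) * UU n \<omega>" using AA_eq2[OF n S] by (simp add: VV_def)
  then have "(AA n \<omega>)^2 = (eps * eps) * \<sigma>e^2 * sn n * (UU n \<omega>)^2"
    using sn by (simp add: power_mult_distrib power2_eq_square)
  then show ?thesis using sn eps_sq by (simp add: TT_def)
qed


lemma SS_eq2: "SS n \<omega> = real n * qform2 1 (XT n \<omega>) (X2T n \<omega>) (B2T n \<omega> - YT n \<omega>) (B1T n \<omega> - 0)"
  by (simp add: SS_def ftest_t_def XT_def X2T_def B2T_def YT_def B1T_def)

lemma SS_meas_ev: "\<forall>\<^sub>F n in sequentially. SS n \<in> borel_measurable (M n)"
  using cip_meas[OF XT_cip] cip_meas[OF X2T_cip] cip_meas[OF YT_cip] cip_meas[OF B1T_cip] cip_meas[OF B2T_cip]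
proof eventually_elim
  case (elim n)
  note [measurable] = elim
  show ?case unfolding SS_eq2[abs_def] qform2_def by measurable
qed

lemma TT_eq2: "TT n \<omega> = \<sigma>e^2 * (VV n \<omega> + mp n)^2"
  by (simp add: TT_def VV_def)

lemma TT_meas_ev: "\<forall>\<^sub>F n in sequentially. TT n \<in> borel_measurable (M n)"
  using Sx_pos_ev
proof eventually_elim
  case (elim n)
  have [measurable]: "VV n \<in> borel_measurable (M n)" using VV_meas elim by auto
  show ?case unfolding TT_eq2[abs_def] by measurable
qed

lemma SSTT_cip: "cip (\<lambda>n \<omega>. SS n \<omega> - TT n \<omega>) 0"
proof -
  define s0 where "s0 = cx2 - cx * cx"
  have s0: "s0 > 0" using s_pos by (simp add: s0_def)
  have iST: "cip (\<lambda>n \<omega>. inverse (ST n \<omega>)) (inverse s0)"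
    using cip_inverse[OF ST_cip] s0 by (simp add: s0_def)
  have isn: "cip (\<lambda>n \<omega>. inverse (sn n)) (inverse s0)"
    by (rule cip_const) (use tendsto_inverse[OF sn_lim] s0 in \<open>simp add: s0_def\<close>)
  have dif: "cip (\<lambda>n \<omega>. inverse (ST n \<omega>) - inverse (sn n)) 0"
    using cip_diff[OF iST isn] by simp
  have R1: "cip (\<lambda>n \<omega>. (AA n \<omega> * AA n \<omega>) * (inverse (ST n \<omega>) - inverse (sn n))) 0"
    by (rule bip_cip0_mult[OF bip_mult[OF AA_bip AA_bip] dif])
  have R2: "cip (\<lambda>n \<omega>. (2 * AA n \<omega>) * DD n \<omega>) 0"
    by (rule bip_cip0_mult[OF bip_mult[OF cip_imp_bip[OF cip_const[OF tendsto_const]] AA_bip] DD_cip])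
  have R3: "cip (\<lambda>n \<omega>. DD n \<omega> * DD n \<omega>) 0"
    using cip_mult[OF DD_cip DD_cip] by simp
  have R23: "cip (\<lambda>n \<omega>. (2 * AA n \<omega>) * DD n \<omega> + DD n \<omega> * DD n \<omega>) 0"
    using cip_add[OF R2 R3] by simp
  have R4: "cip (\<lambda>n \<omega>. inverse (ST n \<omega>) * ((2 * AA n \<omega>) * DD n \<omega> + DD n \<omega> * DD n \<omega>)) 0"
    by (rule bip_cip0_mult[OF cip_imp_bip[OF iST] R23])
  define R where "R n \<omega> = (AA n \<omega> * AA n \<omega>) * (inverse (ST n \<omega>) - inverse (sn n))
      + inverse (ST n \<omega>) * ((2 * AA n \<omega>) * DD n \<omega> + DD n \<omega> * DD n \<omega>)" for n \<omega>
  have Rc: "cip R 0" using cip_add[OF R1 R4] by (simp add: R_def[abs_def])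
  have E0: "cip (\<lambda>n \<omega>. SS n \<omega> - TT n \<omega> - R n \<omega>) 0"
  proof (rule cip_zero_outside[where Q="\<lambda>n \<omega>. s0/2 < \<bar>ST n \<omega> - s0\<bar>"])
    show "\<forall>\<^sub>F n in sequentially. (\<lambda>\<omega>. SS n \<omega> - TT n \<omega> - R n \<omega>) \<in> borel_measurable (M n)"
      using SS_meas_ev TT_meas_ev cip_meas[OF Rc]
    proof eventually_elim
      case (elim n)
      note [measurable] = elim
      show ?case by measurable
    qed
    show "\<forall>\<^sub>F n in sequentially. {\<omega> \<in> space (M n). s0/2 < \<bar>ST n \<omega> - s0\<bar>} \<in> sets (M n)"
      using cip_meas[OF ST_cip]
    proof eventually_elim
      case (elim n)
      note [measurable] = elim
      show ?case by measurable
    qed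
    show "(\<lambda>n. measure (M n) {\<omega> \<in> space (M n). s0/2 < \<bar>ST n \<omega> - s0\<bar>}) \<longlonglongrightarrow> 0"
      using cip_lim[OF ST_cip, of "s0/2"] s0 by (simp add: s0_def)
    show "\<forall>\<^sub>F n in sequentially. \<forall>\<omega>\<in>space (M n). SS n \<omega> - TT n \<omega> - R n \<omega> \<noteq> 0 \<longrightarrow> s0/2 < \<bar>ST n \<omega> - s0\<bar>"
      using Sx_pos_ev
    proof eventually_elim
      case (elim n)
      show ?case
      proof (intro ballI impI, rule ccontr)
        fix \<omega> assume ne: "SS n \<omega> - TT n \<omega> - R n \<omega> \<noteq> 0" and q: "\<not> s0/2 < \<bar>ST n \<omega> - s0\<bar>"
        have st: "ST n \<omega> \<noteq> 0" using q s0 by auto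
        have sn: "sn n > 0" using elim by (simp add: sn_def)
        have "SS n \<omega> = (AA n \<omega> + DD n \<omega>)^2 / ST n \<omega>" using SS_eq[OF st] by (simp add: DD_def)
        moreover have "TT n \<omega> = (AA n \<omega>)^2 / sn n" using TT_eq elim by auto
        moreover have gen: "\<And>A D st sn :: real. st \<noteq> 0 \<Longrightarrow> sn \<noteq> 0 \<Longrightarrow>
          (A + D)^2/st - A^2/sn - (A*A*(inverse st - inverse sn) + inverse st * ((2*A)*D + D*D)) = 0"
          by (simp add: field_simps power2_eq_square)
        ultimately have "SS n \<omega> - TT n \<omega> - R n \<omega> = 0"
          using st sn unfolding R_def by (metis less_irrefl)
        then show False using ne by simp
      qed
    qed
  qed
  show ?thesis using cip_add[OF E0 Rc] by simp
qed

end

lemma cts_step_cont: "u < v \<Longrightarrow> continuous_on UNIV (cts_step u v)"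
  using uniformly_continuous_imp_continuous[OF cts_step_uniformly_continuous] by blast

lemma cts_step_meas: "u < v \<Longrightarrow> cts_step u v \<in> borel_measurable borel"
  by (rule borel_measurable_continuous_onI[OF cts_step_cont])

lemma cts_step_isCont: "u < v \<Longrightarrow> isCont (cts_step u v) z"
  using cts_step_cont continuous_on_eq_continuous_at by blast

lemma cts_step_bound: "\<bar>cts_step u v z\<bar> \<le> 1" if "u < v"
  using that by (auto simp: cts_step_def divide_simps)

lemma cts_step_lip:
  assumes uv: "u < v"
  shows "\<bar>cts_step u v a - cts_step u v b\<bar> \<le> (1 / (v - u)) * \<bar>a - b\<bar>"
proof -
  have g: "\<bar>cts_step u v a - cts_step u v b\<bar> \<le> (1 / (v - u)) * \<bar>a - b\<bar>" if ab: "a \<le> b" for a b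
  proof -
    have d: "v - u > 0" using uv by simp
    have "cts_step u v a = max 0 (min 1 ((v - a) / (v - u)))"
      using uv by (auto simp: cts_step_def field_simps max_def min_def)
    moreover have "cts_step u v b = max 0 (min 1 ((v - b) / (v - u)))"
      using uv by (auto simp: cts_step_def field_simps max_def min_def)
    moreover have "\<bar>max 0 (min 1 p) - max 0 (min 1 q)\<bar> \<le> \<bar>p - q\<bar>" for p q :: real
      by (auto simp: max_def min_def abs_if)
    moreover have "\<bar>(v - a) / (v - u) - (v - b) / (v - u)\<bar> = (1 / (v - u)) * \<bar>a - b\<bar>"
      using d by (simp add: diff_divide_distrib[symmetric] abs_divide abs_minus_commute)
    ultimately show ?thesis by metis
  qed
  show ?thesis
  proof (cases "a \<le> b")
    case True then show ?thesis using g by blast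
  next
    case False then show ?thesis using g[of b a] by (simp add: abs_minus_commute)
  qed
qed

context seqprob
begin

lemma exp_lip:
  fixes f :: "real \<Rightarrow> real"
  assumes ST: "cip (\<lambda>n \<omega>. S n \<omega> - T n \<omega>) 0"
    and mS: "\<forall>\<^sub>F n in sequentially. S n \<in> borel_measurable (M n)"
    and mT: "\<forall>\<^sub>F n in sequentially. T n \<in> borel_measurable (M n)"
    and f: "f \<in> borel_measurable borel" and fb: "\<And>z. \<bar>f z\<bar> \<le> 1"
    and L: "L \<ge> 0" and lip: "\<And>a b. \<bar>f a - f b\<bar> \<le> L * \<bar>a - b\<bar>"
  shows "(\<lambda>n. (\<integral>\<omega>. f (S n \<omega>) \<partial>M n) - (\<integral>\<omega>. f (T n \<omega>) \<partial>M n)) \<longlonglongrightarrow> 0"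
proof (rule tendstoI)
  fix d :: real assume d: "d > 0"
  define \<delta> where "\<delta> = d / (4 * (L + 1))"
  have \<delta>: "\<delta> > 0" using d L by (simp add: \<delta>_def)
  have Ld: "L * \<delta> \<le> d / 4"
  proof -
    have "L * \<delta> = d / 4 * (L / (L + 1))" using L by (simp add: \<delta>_def field_simps)
    also have "\<dots> \<le> d / 4 * 1" using L d by (intro mult_left_mono) auto
    finally show ?thesis by simp
  qed
  have P: "\<forall>\<^sub>F n in sequentially. measure (M n) {\<omega> \<in> space (M n). \<delta> < \<bar>S n \<omega> - T n \<omega>\<bar>} \<le> d / 8"
    using cip0_D[OF ST \<delta>, of "d/8"] d by simp
  show "\<forall>\<^sub>F n in sequentially. dist ((\<integral>\<omega>. f (S n \<omega>) \<partial>M n) - (\<integral>\<omega>. f (T n \<omega>) \<partial>M n)) 0 < d"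
    using P mS mT ev_gt2
  proof eventually_elim
    case (elim n)
    interpret Pn: prob_space "M n" using prob elim by auto
    have [measurable]: "S n \<in> borel_measurable (M n)" "T n \<in> borel_measurable (M n)" "f \<in> borel_measurable borel"
      using elim f by auto
    define B where "B = {\<omega> \<in> space (M n). \<delta> < \<bar>S n \<omega> - T n \<omega>\<bar>}"
    have B[measurable]: "B \<in> sets (M n)" unfolding B_def by measurable
    have iS: "integrable (M n) (\<lambda>\<omega>. f (S n \<omega>))"
      by (rule Pn.integrable_const_bound[where B=1]) (auto simp: fb)
    have iT: "integrable (M n) (\<lambda>\<omega>. f (T n \<omega>))"
      by (rule Pn.integrable_const_bound[where B=1]) (auto simp: fb)
    have iB: "integrable (M n) (\<lambda>\<omega>. L * \<delta> + 2 * indicator B \<omega>)"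
      by (rule Pn.integrable_const_bound[where B="L * \<delta> + 2"]) (use L \<delta> in \<open>auto simp: indicator_def\<close>)
    have "\<bar>(\<integral>\<omega>. f (S n \<omega>) \<partial>M n) - (\<integral>\<omega>. f (T n \<omega>) \<partial>M n)\<bar> = \<bar>\<integral>\<omega>. f (S n \<omega>) - f (T n \<omega>) \<partial>M n\<bar>"
      using iS iT by (simp add: Bochner_Integration.integral_diff)
    also have "\<dots> \<le> (\<integral>\<omega>. \<bar>f (S n \<omega>) - f (T n \<omega>)\<bar> \<partial>M n)"
      by (rule integral_abs_bound)
    also have "\<dots> \<le> (\<integral>\<omega>. L * \<delta> + 2 * indicator B \<omega> \<partial>M n)"
    proof (rule integral_mono)
      show "integrable (M n) (\<lambda>\<omega>. \<bar>f (S n \<omega>) - f (T n \<omega>)\<bar>)" using iS iT by auto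
      show "integrable (M n) (\<lambda>\<omega>. L * \<delta> + 2 * indicator B \<omega>)" by (rule iB)
      fix \<omega> assume \<omega>: "\<omega> \<in> space (M n)"
      show "\<bar>f (S n \<omega>) - f (T n \<omega>)\<bar> \<le> L * \<delta> + 2 * indicator B \<omega>"
      proof (cases "\<omega> \<in> B")
        case True
        have "\<bar>f (S n \<omega>) - f (T n \<omega>)\<bar> \<le> 2" using fb[of "S n \<omega>"] fb[of "T n \<omega>"] by linarith
        moreover have "L * \<delta> \<ge> 0" using L \<delta> by simp
        ultimately show ?thesis using True by (simp add: indicator_def)
      next
        case False
        then have "\<bar>S n \<omega> - T n \<omega>\<bar> \<le> \<delta>" using \<omega> by (auto simp: B_def)
        then have "L * \<bar>S n \<omega> - T n \<omega>\<bar> \<le> L * \<delta>" using L by (intro mult_left_mono) auto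
        then show ?thesis using lip[of "S n \<omega>" "T n \<omega>"] False by (simp add: indicator_def)
      qed
    qed
    also have "\<dots> = L * \<delta> + 2 * measure (M n) B"
      using Pn.prob_space by (simp add: Bochner_Integration.integral_add less_top[symmetric])
    also have "\<dots> \<le> d / 4 + 2 * (d / 8)" using Ld elim(1) by (simp add: B_def)
    also have "\<dots> < d" using d by simp
    finally show ?case by (simp add: dist_real_def)
  qed
qed

end

context sett
begin

lemma ETT_eq:
  assumes n: "n > 2" "Sx n > 0" and g: "g \<in> borel_measurable borel"
  shows "(\<integral>\<omega>. g (TT n \<omega>) \<partial>M n) = (\<integral>w. std_normal_density w * g (\<sigma>e^2 * (w + mp n)^2) \<partial>lborel)"
proof -
  have [measurable]: "g \<in> borel_measurable borel" by fact
  have "(\<integral>w. std_normal_density w * g (\<sigma>e^2 * (w + mp n)^2) \<partial>lborel) =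
        (\<integral>\<omega>. g (\<sigma>e^2 * (VV n \<omega> + mp n)^2) \<partial>M n)"
    by (rule distributed_integral[OF VV_normal[OF n], of "\<lambda>w. g (\<sigma>e^2 * (w + mp n)^2)"]) auto
  then show ?thesis by (simp add: TT_eq2)
qed

lemma ETT_lim:
  assumes uv: "u < v"
  shows "(\<lambda>n. \<integral>\<omega>. cts_step u v (TT n \<omega>) \<partial>M n) \<longlonglongrightarrow>
     (\<integral>w. std_normal_density w * cts_step u v (\<sigma>e^2 * (w + \<eta>)^2) \<partial>lborel)"
proof -
  note fm[measurable] = cts_step_meas[OF uv]
  have "\<forall>\<^sub>F n in sequentially. (\<integral>\<omega>. cts_step u v (TT n \<omega>) \<partial>M n) =
     (\<integral>w. std_normal_density w * cts_step u v (\<sigma>e^2 * (w + mp n)^2) \<partial>lborel)"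
    using Sx_pos_ev by eventually_elim (intro ETT_eq fm, auto)
  moreover have "(\<lambda>n. \<integral>w. std_normal_density w * cts_step u v (\<sigma>e^2 * (w + mp n)^2) \<partial>lborel) \<longlonglongrightarrow>
     (\<integral>w. std_normal_density w * cts_step u v (\<sigma>e^2 * (w + \<eta>)^2) \<partial>lborel)"
  proof (rule integral_dominated_convergence[where w="std_normal_density"])
    show "(\<lambda>w. std_normal_density w * cts_step u v (\<sigma>e^2 * (w + \<eta>)^2)) \<in> borel_measurable lborel" by measurable
    show "(\<lambda>w. std_normal_density w * cts_step u v (\<sigma>e^2 * (w + mp n)^2)) \<in> borel_measurable lborel" for n
      by measurable
    show "integrable lborel std_normal_density" by simp
    show "AE w in lborel. (\<lambda>n. std_normal_density w * cts_step u v (\<sigma>e^2 * (w + mp n)^2)) \<longlonglongrightarrow>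
        std_normal_density w * cts_step u v (\<sigma>e^2 * (w + \<eta>)^2)"
    proof (rule AE_I2)
      fix w :: real
      have "(\<lambda>n. \<sigma>e^2 * (w + mp n)^2) \<longlonglongrightarrow> \<sigma>e^2 * (w + \<eta>)^2" by (intro tendsto_intros mp_lim)
      then have "(\<lambda>n. cts_step u v (\<sigma>e^2 * (w + mp n)^2)) \<longlonglongrightarrow> cts_step u v (\<sigma>e^2 * (w + \<eta>)^2)"
        by (rule isCont_tendsto_compose[OF cts_step_isCont[OF uv]])
      then show "(\<lambda>n. std_normal_density w * cts_step u v (\<sigma>e^2 * (w + mp n)^2)) \<longlonglongrightarrow>
        std_normal_density w * cts_step u v (\<sigma>e^2 * (w + \<eta>)^2)" by (intro tendsto_intros)
    qed
    show "AE w in lborel. norm (std_normal_density w * cts_step u v (\<sigma>e^2 * (w + mp n)^2)) \<le> std_normal_density w" for n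
    proof (rule AE_I2)
      fix w :: real
      have "std_normal_density w * \<bar>cts_step u v (\<sigma>e^2 * (w + mp n)^2)\<bar> \<le> std_normal_density w * 1"
        by (intro mult_left_mono cts_step_bound uv) simp
      then show "norm (std_normal_density w * cts_step u v (\<sigma>e^2 * (w + mp n)^2)) \<le> std_normal_density w"
        by (simp add: abs_mult)
    qed
  qed
  ultimately show ?thesis by (subst tendsto_cong) auto
qed

lemma target_int:
  assumes uv: "u < v"
  shows "integral\<^sup>L (distr (density lborel std_normal_density) borel (\<lambda>w. \<sigma>e^2 * (w + \<eta>)^2)) (cts_step u v)
     = (\<integral>w. std_normal_density w * cts_step u v (\<sigma>e^2 * (w + \<eta>)^2) \<partial>lborel)"
proof -
  note fm[measurable] = cts_step_meas[OF uv]
  have "integral\<^sup>L (distr (density lborel std_normal_density) borel (\<lambda>w. \<sigma>e^2 * (w + \<eta>)^2)) (cts_step u v)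
     = integral\<^sup>L (density lborel std_normal_density) (\<lambda>w. cts_step u v (\<sigma>e^2 * (w + \<eta>)^2))"
    by (rule integral_distr) auto
  also have "\<dots> = (\<integral>w. std_normal_density w * cts_step u v (\<sigma>e^2 * (w + \<eta>)^2) \<partial>lborel)"
    by (subst integral_density) auto
  finally show ?thesis .
qed

lemma part2:
  "weak_conv_m
     (\<lambda>n. distr (M n) borel
            (\<lambda>\<omega>. real n * ftest_t (\<Delta> n) (\<rho> n) n (x n) (\<lambda>i. Y n i \<omega>) (\<lambda>k. Z n k \<omega>)))
     (distr (density lborel std_normal_density) borel (\<lambda>w. \<sigma>e^2 * (w + \<eta>)^2))"
proof -
  have eqSS: "(\<lambda>n. distr (M n) borel
            (\<lambda>\<omega>. real n * ftest_t (\<Delta> n) (\<rho> n) n (x n) (\<lambda>i. Y n i \<omega>) (\<lambda>k. Z n k \<omega>)))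
       = (\<lambda>n. distr (M n) borel (SS n))"
    by (intro ext) (simp add: SS_def[abs_def])
  define Tg where "Tg = distr (density lborel std_normal_density) borel (\<lambda>w. \<sigma>e^2 * (w + \<eta>)^2)"
  have "\<forall>\<^sub>F n in sequentially. n > 2 \<and> SS n \<in> borel_measurable (M n)"
    using ev_gt2 SS_meas_ev by eventually_elim auto
  then obtain N where N: "\<And>n. n \<ge> N \<Longrightarrow> n > 2 \<and> SS n \<in> borel_measurable (M n)"
    by (auto simp: eventually_sequentially)
  define Mseq where "Mseq n = distr (M (n + N)) borel (SS (n + N))" for n
  have rd: "real_distribution (Mseq n)" for n
  proof -
    have "n + N \<ge> N" by simp
    from N[OF this] have "n + N > 2" "SS (n + N) \<in> borel_measurable (M (n + N))" by auto
    then show ?thesis unfolding Mseq_def by (intro prob_space.real_distribution_distr prob) auto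
  qed
  have rT: "real_distribution Tg"
  proof -
    have P: "prob_space (density lborel std_normal_density)" by (rule prob_space_normal_density) simp
    show ?thesis unfolding Tg_def by (intro prob_space.real_distribution_distr[OF P]) auto
  qed
  have conv: "(\<lambda>n. integral\<^sup>L (Mseq n) (cts_step u v)) \<longlonglongrightarrow> integral\<^sup>L Tg (cts_step u v)" if uv: "u < v" for u v
  proof -
    note fm[measurable] = cts_step_meas[OF uv]
    have d: "(\<lambda>n. (\<integral>\<omega>. cts_step u v (SS n \<omega>) \<partial>M n) - (\<integral>\<omega>. cts_step u v (TT n \<omega>) \<partial>M n)) \<longlonglongrightarrow> 0"
      by (rule exp_lip[OF SSTT_cip SS_meas_ev TT_meas_ev fm cts_step_bound[OF uv] _ cts_step_lip[OF uv]])
         (use uv in simp)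
    have "(\<lambda>n. ((\<integral>\<omega>. cts_step u v (SS n \<omega>) \<partial>M n) - (\<integral>\<omega>. cts_step u v (TT n \<omega>) \<partial>M n))
             + (\<integral>\<omega>. cts_step u v (TT n \<omega>) \<partial>M n))
         \<longlonglongrightarrow> 0 + (\<integral>w. std_normal_density w * cts_step u v (\<sigma>e^2 * (w + \<eta>)^2) \<partial>lborel)"
      by (intro tendsto_add d ETT_lim uv)
    then have "(\<lambda>n. \<integral>\<omega>. cts_step u v (SS n \<omega>) \<partial>M n) \<longlonglongrightarrow> integral\<^sup>L Tg (cts_step u v)"
      by (simp add: Tg_def target_int[OF uv])
    then have "(\<lambda>n. \<integral>\<omega>. cts_step u v (SS (n + N) \<omega>) \<partial>M (n + N)) \<longlonglongrightarrow> integral\<^sup>L Tg (cts_step u v)"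
      by (rule LIMSEQ_ignore_initial_segment)
    moreover have "integral\<^sup>L (Mseq n) (cts_step u v) = (\<integral>\<omega>. cts_step u v (SS (n + N) \<omega>) \<partial>M (n + N))" for n
    proof -
      have "n + N \<ge> N" by simp
      from N[OF this] have "SS (n + N) \<in> borel_measurable (M (n + N))" by auto
      then show ?thesis unfolding Mseq_def by (intro integral_distr) auto
    qed
    ultimately show ?thesis by simp
  qed
  have wc: "weak_conv_m Mseq Tg"
    by (rule integral_cts_step_conv_imp_weak_conv[OF rd rT conv])
  have "weak_conv_m (\<lambda>n. distr (M n) borel (SS n)) Tg"
    unfolding weak_conv_m_def weak_conv_def
  proof (intro allI impI)
    fix z assume "isCont (cdf Tg) z"
    then have "(\<lambda>n. cdf (Mseq n) z) \<longlonglongrightarrow> cdf Tg z" using wc by (simp add: weak_conv_m_def weak_conv_def)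
    then have "(\<lambda>n. cdf (distr (M (n + N)) borel (SS (n + N))) z) \<longlonglongrightarrow> cdf Tg z" by (simp add: Mseq_def)
    then show "(\<lambda>n. cdf (distr (M n) borel (SS n)) z) \<longlonglongrightarrow> cdf Tg z"
      by (rule LIMSEQ_offset)
  qed
  then show ?thesis unfolding eqSS Tg_def .
qed

end

theorem lemma5p15:
  fixes \<sigma>e \<beta>1 \<beta>2 cx cx2 \<eta> :: real
    and x :: "nat \<Rightarrow> nat \<Rightarrow> real"
    and \<Delta> \<rho> :: "nat \<Rightarrow> real"
    and M :: "nat \<Rightarrow> 'a measure"
    and Y :: "nat \<Rightarrow> nat \<Rightarrow> 'a \<Rightarrow> real"
    and Z :: "nat \<Rightarrow> nat \<Rightarrow> 'a \<Rightarrow> real"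
  assumes sigma_pos: "\<sigma>e > 0"
    and Delta_pos: "\<And>n. \<Delta> n > 0"
    and rho_pos: "\<And>n. \<rho> n > 0"
    and prob: "\<And>n. n > 2 \<Longrightarrow> prob_space (M n)"
    and Y_distr: "\<And>n i. n > 2 \<Longrightarrow> i < n \<Longrightarrow>
        distributed (M n) lborel (Y n i) (\<lambda>t. ennreal (normal_density (\<beta>2 + \<beta>1 * x n i) \<sigma>e t))"
    and Z_distr: "\<And>n k. n > 2 \<Longrightarrow> k < 5 \<Longrightarrow>
        distributed (M n) lborel (Z n k) (\<lambda>t. ennreal (std_normal_density t))"
    and indep: "\<And>n. n > 2 \<Longrightarrow>
        prob_space.indep_vars (M n) (\<lambda>_. borel) (case_sum (Y n) (Z n)) (Inl ` {..<n} \<union> Inr ` {..<5})"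
    and xbar_lim: "(\<lambda>n. (\<Sum>i<n. x n i) / real n) \<longlonglongrightarrow> cx"
    and x2bar_lim: "(\<lambda>n. (\<Sum>i<n. (x n i)^2) / real n) \<longlonglongrightarrow> cx2"
    and c_ineq: "cx2 > cx^2"
    and eta_lim: "(\<lambda>n. (\<Sum>i<n. ((\<beta>2 + \<beta>1 * x n i)
                       - ((\<beta>2 + \<beta>1 * ((\<Sum>j<n. x n j) / real n)) + 0 * x n i))^2) / \<sigma>e^2)
                  \<longlonglongrightarrow> \<eta>^2"
    and Delta_rho1: "(\<lambda>n. (\<Delta> n)^2 / (\<rho> n * real n)) \<longlonglongrightarrow> 0"
    and Delta_rho2: "(\<lambda>n. (\<Delta> n)^4 / (\<rho> n * real n)) \<longlonglongrightarrow> 0"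
    and y_clip: "(\<lambda>n. measure (M n) {\<omega> \<in> space (M n). \<exists>i<n. Y n i \<omega> \<notin> {-\<Delta> n..\<Delta> n}}) \<longlonglongrightarrow> 0"
    and x_in: "\<And>n i. n > 2 \<Longrightarrow> i < n \<Longrightarrow> x n i \<in> {-\<Delta> n..\<Delta> n}"
  shows "(\<forall>\<epsilon>>0. (\<lambda>n. measure (M n) {\<omega> \<in> space (M n).
             \<bar>real n * resid_t (\<Delta> n) (\<rho> n) n (x n) (\<lambda>i. Y n i \<omega>) (\<lambda>k. Z n k \<omega>) / (real n - 2)
              - \<sigma>e^2\<bar> > \<epsilon>}) \<longlonglongrightarrow> 0)
         \<and> weak_conv_m
           (\<lambda>n. distr (M n) borel
                  (\<lambda>\<omega>. real n * ftest_t (\<Delta> n) (\<rho> n) n (x n) (\<lambda>i. Y n i \<omega>) (\<lambda>k. Z n k \<omega>)))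
           (distr (density lborel std_normal_density) borel (\<lambda>w. \<sigma>e^2 * (w + \<eta>)^2))"
proof -
  interpret S: sett M \<sigma>e \<beta>1 \<beta>2 cx cx2 \<eta> x \<Delta> \<rho> Y Z
    by (rule sett.intro[OF seqprob.intro sett_axioms.intro]) (fact assms)+
  show ?thesis by (rule conjI[OF S.part1 S.part2])
qed

end
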